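(* With $B_k$ the Bernoulli numbers ($\frac{X}{e^X-1}=\sum_{k\ge0}\frac{B_k}{k!}X^k$) and $T$ the generating series of bi-brackets defined in the context, the product of two length-one generating series can be written in the following two ways: (i) \[ T\binom{X_1}{Y_1}T\binom{X_2}{Y_2}=T\binom{X_1,X_2}{Y_1,Y_2}+T\binom{X_2,X_1}{Y_2,Y_1}+\frac{1}{X_1-X_2}\Big(T\binom{X_1}{Y_1+Y_2}-T\binom{X_2}{Y_1+Y_2}\Big)+\sum_{k=1}^{\infty}\frac{B_k}{k!}(X_1-X_2)^{k-1}\Big(T\binom{X_1}{Y_1+Y_2}+(-1)^{k-1}T\binom{X_2}{Y_1+Y_2}\Big); \] (ii) \[ T\binom{X_1}{Y_1}T\binom{X_2}{Y_2}=T\binom{X_1+X_2,\,X_1}{Y_2,\,Y_1-Y_2}+T\binom{X_1+X_2,\,X_2}{Y_1,\,Y_2-Y_1}+\frac{1}{Y_1-Y_2}\Big(T\binom{X_1+X_2}{Y_1}-T\binom{X_1+X_2}{Y_2}\Big)+\sum_{k=1}^{\infty}\frac{B_k}{k!}(Y_1-Y_2)^{k-1}\Big(T\binom{X_1+X_2}{Y_1}+(-1)^{k-1}T\binom{X_1+X_2}{Y_2}\Big). \]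
   Context: For integers $s_1,\dots,s_l\ge1$ and $r_1,\dots,r_l\ge0$ the bi-bracket is \[ \left[\begin{matrix}s_1,\dots,s_l\\ r_1,\dots,r_l\end{matrix}\right]:=\sum_{\substack{u_1>\dots>u_l>0\\ v_1,\dots,v_l>0}}\prod_{j=1}^{l}\frac{u_j^{r_j}}{r_j!}\,\frac{v_j^{s_j-1}}{(s_j-1)!}\;q^{u_1v_1+\dots+u_lv_l}\in\mathbb{Q}[[q]], \] and its generating series is \[ T\binom{X_1,\dots,X_l}{Y_1,\dots,Y_l}:=\sum_{\substack{s_1,\dots,s_l>0\\ r_1,\dots,r_l>0}}\left[\begin{matrix}s_1,\dots,s_l\\ r_1-1,\dots,r_l-1\end{matrix}\right]X_1^{s_1-1}\cdots X_l^{s_l-1}Y_1^{r_1-1}\cdots Y_l^{r_l-1}. \] Identities are of formal power series in $q$ and the variables (the quotients by $X_1-X_2$, resp. $Y_1-Y_2$, are power series). *)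

theory Defs
  imports Complex_Main "HOL-Library.Function_Algebras"
    "HOL-Computational_Algebra.Formal_Power_Series"
begin

definition bernoulli :: "nat \<Rightarrow> rat" where
  "bernoulli k = fact k * fps_nth (fps_X / (fps_exp 1 - 1)) k"

text \<open>bibracket s r N = coefficient of q^N in the bi-bracket with upper row s
  and lower row r (lists of equal length l): sum over u_1 > ... > u_l > 0 and
  v_1,...,v_l > 0 with u_1 v_1 + ... + u_l v_l = N.\<close>
definition bibracket :: "nat list \<Rightarrow> nat list \<Rightarrow> nat \<Rightarrow> rat" where
  "bibracket s r N =
     (\<Sum>(u, v) \<in> {(u, v). length u = length s \<and> length v = length s \<and>
                     sorted_wrt (>) u \<and> (\<forall>x\<in>set u. 0 < x) \<and> (\<forall>x\<in>set v. 0 < x) \<and>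
                     (\<Sum>j<length s. u ! j * v ! j) = N}.
        \<Prod>j<length s. (of_nat (u ! j) ^ (r ! j) / fact (r ! j)) *
                        (of_nat (v ! j) ^ (s ! j - 1) / fact (s ! j - 1)))"

text \<open>A series is its coefficient function: the value at (n,a,b,c,d) is the
  coefficient of q^n X1^a X2^b Y1^c Y2^d. Addition, subtraction, zero are
  pointwise (HOL-Library.Function_Algebras).\<close>
type_synonym mono = "nat \<times> nat \<times> nat \<times> nat \<times> nat"
type_synonym ser = "mono \<Rightarrow> rat"

definition smult :: "ser \<Rightarrow> ser \<Rightarrow> ser" where
  "smult f g = (\<lambda>(n, a, b, c, d).
     \<Sum>(n', a', b', c', d') \<in> {..n} \<times> {..a} \<times> {..b} \<times> {..c} \<times> {..d}.
        f (n', a', b', c', d') * g (n - n', a - a', b - b', c - c', d - d'))"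

definition sone :: ser where
  "sone = (\<lambda>m. if m = (0, 0, 0, 0, 0) then 1 else 0)"

definition spow :: "ser \<Rightarrow> nat \<Rightarrow> ser" where
  "spow f k = (smult f ^^ k) sone"

definition sprodl :: "ser list \<Rightarrow> ser" where
  "sprodl fs = foldr smult fs sone"

definition sscale :: "rat \<Rightarrow> ser \<Rightarrow> ser" where
  "sscale c f = (\<lambda>m. c * f m)"

definition sX1 :: ser where "sX1 = (\<lambda>m. if m = (0, 1, 0, 0, 0) then 1 else 0)"
definition sX2 :: ser where "sX2 = (\<lambda>m. if m = (0, 0, 1, 0, 0) then 1 else 0)"
definition sY1 :: ser where "sY1 = (\<lambda>m. if m = (0, 0, 0, 1, 0) then 1 else 0)"
definition sY2 :: ser where "sY2 = (\<lambda>m. if m = (0, 0, 0, 0, 1) then 1 else 0)"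

definition qser :: "(nat \<Rightarrow> rat) \<Rightarrow> ser" where
  "qser f = (\<lambda>(n, a, b, c, d). if a = 0 \<and> b = 0 \<and> c = 0 \<and> d = 0 then f n else 0)"

text \<open>Formal (coefficientwise) sum of a family of series; meaningful when every
  coefficient receives only finitely many nonzero contributions.\<close>
definition fsum :: "('i \<Rightarrow> ser) \<Rightarrow> ser" where
  "fsum F = (\<lambda>m. \<Sum>i \<in> {i. F i m \<noteq> 0}. F i m)"

text \<open>Quotient of series (the context guarantees it exists; it is unique for
  divisors like X1 - X2).\<close>
definition sdiv :: "ser \<Rightarrow> ser \<Rightarrow> ser" where
  "sdiv f g = (SOME h. smult g h = f)"

text \<open>T(Z_1..Z_l; W_1..W_l) = sum over s_j, r_j > 0 of
  [s_1..s_l; r_1-1..r_l-1] Z_1^(s_1-1)...Z_l^(s_l-1) W_1^(r_1-1)...W_l^(r_l-1),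
  indexed by the exponent lists es = (s_j - 1), fs = (r_j - 1).\<close>
definition Tgen :: "ser list \<Rightarrow> ser list \<Rightarrow> ser" where
  "Tgen Zs Ws = fsum (\<lambda>(es :: nat list, fs :: nat list).
     if length es = length Zs \<and> length fs = length Ws then
       smult (qser (bibracket (map Suc es) fs))
         (smult (sprodl (map2 spow Zs es)) (sprodl (map2 spow Ws fs)))
     else 0)"

end

theory Submission
  imports Defs
begin

unbundle fps_syntax


type_synonym P = "rat fps fps fps fps fps"

definition phi :: "ser \<Rightarrow> P" where
 "phi f = Abs_fps (\<lambda>n. Abs_fps (\<lambda>a. Abs_fps (\<lambda>b. Abs_fps (\<lambda>c. Abs_fps (\<lambda>d. f (n,a,b,c,d))))))"

lemma phi_nth: "phi f $ n $ a $ b $ c $ d = f (n,a,b,c,d)"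
  by (simp add: phi_def)

lemma phi_inj: "phi f = phi g \<Longrightarrow> f = g"
proof (rule ext)
  fix m :: mono assume "phi f = phi g"
  obtain n a b c d where m: "m = (n,a,b,c,d)" by (cases m) auto
  have "phi f $ n $ a $ b $ c $ d = phi g $ n $ a $ b $ c $ d" using \<open>phi f = phi g\<close> by simp
  thus "f m = g m" by (simp add: phi_nth m)
qed

lemma phi_eq_iff: "phi f = phi g \<longleftrightarrow> f = g" using phi_inj by blast

lemma smult_nested: "smult f g (n,a,b,c,d) = (\<Sum>n'\<le>n. \<Sum>a'\<le>a. \<Sum>b'\<le>b. \<Sum>c'\<le>c. \<Sum>d'\<le>d.
   f(n',a',b',c',d') * g(n-n',a-a',b-b',c-c',d-d'))"
  unfolding smult_def by (simp add: sum.cartesian_product split_def)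

lemma phi_mult: "phi (smult f g) = phi f * phi g"
  apply (intro fps_ext)
  apply (simp add: phi_nth fps_mult_nth fps_sum_nth smult_nested atLeast0AtMost)
  done


lemma sum_fun_app: "(\<Sum>i\<in>A. F i) m = (\<Sum>i\<in>A. (F i) m)"
  by (induction A rule: infinite_finite_induct) auto

definition sconst :: "rat \<Rightarrow> ser" where "sconst c = (\<lambda>m. if m = (0,0,0,0,0) then c else 0)"
definition cP :: "rat \<Rightarrow> P" where "cP c = phi (sconst c)"

lemma phi_add: "phi (f + g) = phi f + phi g"
  by (intro fps_ext) (simp add: phi_nth)
lemma phi_diff: "phi (f - g) = phi f - phi g"
  by (intro fps_ext) (simp add: phi_nth)
lemma phi_uminus: "phi (- f) = - phi f"
  by (intro fps_ext) (simp add: phi_nth)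
lemma phi_zero: "phi 0 = 0"
  by (intro fps_ext) (simp add: phi_nth)
lemma phi_sone: "phi sone = 1"
  by (intro fps_ext) (simp add: phi_nth sone_def)
lemma phi_sum: "phi (\<Sum>i\<in>A. F i) = (\<Sum>i\<in>A. phi (F i))"
proof (induction A rule: infinite_finite_induct)
  case (infinite A) thus ?case by (metis sum.infinite phi_zero)
next
  case empty thus ?case by (simp only: sum.empty phi_zero)
next
  case (insert x A) thus ?case by (metis sum.insert phi_add)
qed

lemma sscale_conv: "sscale c f = smult (sconst c) f"
proof
  fix m :: mono
  obtain n a b cc d where m: "m = (n,a,b,cc,d)" by (cases m) auto
  have "smult (sconst c) f m = (\<Sum>p\<in>{..n} \<times> {..a} \<times> {..b} \<times> {..cc} \<times> {..d}.
      (if p = (0,0,0,0,0) then c * f (n,a,b,cc,d) else 0))"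
    unfolding m smult_def prod.case by (intro sum.cong) (auto simp: sconst_def split: if_splits)
  also have "\<dots> = c * f (n,a,b,cc,d)" by (simp add: sum.delta)
  finally show "sscale c f m = smult (sconst c) f m" by (simp add: m sscale_def)
qed

lemma phi_sscale: "phi (sscale c f) = cP c * phi f"
  by (simp add: sscale_conv phi_mult cP_def)

lemma phi_spow: "phi (spow f k) = phi f ^ k"
  by (induction k) (simp_all add: spow_def phi_sone phi_mult)

lemma phi_sprodl: "phi (sprodl fs) = (\<Prod>f\<leftarrow>fs. phi f)"
  by (induction fs) (simp_all add: sprodl_def phi_sone phi_mult)

lemma cP_add: "cP (a + b) = cP a + cP b"
  unfolding cP_def phi_add[symmetric] by (rule arg_cong[where f=phi]) (auto simp: sconst_def)
lemma cP_mult: "cP (a * b) = cP a * cP b"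
proof -
  have "sconst (a*b) = sscale a (sconst b)" by (auto simp: sconst_def sscale_def)
  thus ?thesis unfolding cP_def by (simp add: phi_sscale cP_def)
qed
lemma cP_1: "cP 1 = 1"
proof -
  have "sconst 1 = sone" by (auto simp: sconst_def sone_def)
  thus ?thesis by (simp add: cP_def phi_sone)
qed
lemma cP_0: "cP 0 = 0"
proof -
  have "sconst 0 = 0" by (auto simp: sconst_def)
  thus ?thesis by (simp add: cP_def phi_zero)
qed
lemma cP_uminus: "cP (- a) = - cP a"
  using cP_add[of a "-a"] by (simp add: cP_0 eq_neg_iff_add_eq_0 add.commute)
lemma cP_power: "cP (c ^ k) = cP c ^ k"
  by (induction k) (simp_all add: cP_1 cP_mult)
lemma cP_of_nat: "cP (of_nat k) = of_nat k"
  by (induction k) (simp_all add: cP_0 cP_add cP_1)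

lemmas phi_simps = phi_add phi_diff phi_uminus phi_zero phi_sone phi_sum phi_sscale
   phi_spow phi_mult phi_sprodl

lemma phiI: "phi f = phi g \<Longrightarrow> f = g" by (rule phi_inj)

lemma smult_comm: "smult f g = smult g f"
  by (rule phiI) (simp add: phi_simps mult.commute)
lemma smult_assoc: "smult (smult f g) h = smult f (smult g h)"
  by (rule phiI) (simp add: phi_simps mult.assoc)
lemma smult_lcomm: "smult f (smult g h) = smult g (smult f h)"
  by (rule phiI) (simp add: phi_simps mult.left_commute)
lemmas smult_ac = smult_comm smult_assoc smult_lcomm
lemma smult_sone[simp]: "smult sone f = f" "smult f sone = f"
  by (rule phiI, simp add: phi_simps)+
lemma smult_zero[simp]: "smult 0 f = 0" "smult f 0 = 0"
  by (rule phiI, simp add: phi_simps)+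
lemma smult_add: "smult (f + g) h = smult f h + smult g h" "smult h (f + g) = smult h f + smult h g"
  by (rule phiI, simp add: phi_simps algebra_simps)+
lemma smult_diff: "smult (f - g) h = smult f h - smult g h" "smult h (f - g) = smult h f - smult h g"
  by (rule phiI, simp add: phi_simps algebra_simps)+
lemma smult_uminus: "smult (- f) h = - smult f h" "smult h (- f) = - smult h f"
  by (rule phiI, simp add: phi_simps algebra_simps)+
lemma smult_sscale: "smult (sscale c f) g = sscale c (smult f g)" "smult g (sscale c f) = sscale c (smult g f)"
  by (rule phiI, simp add: phi_simps algebra_simps)+
lemma sscale_sscale: "sscale c (sscale d f) = sscale (c*d) f"
  by (auto simp: sscale_def)
lemma sscale_add: "sscale c (f + g) = sscale c f + sscale c g"
  by (auto simp: sscale_def algebra_simps)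
lemma sscale_diff: "sscale c (f - g) = sscale c f - sscale c g"
  by (auto simp: sscale_def algebra_simps)
lemma sscale_add2: "sscale (c + d) f = sscale c f + sscale d f"
  by (auto simp: sscale_def algebra_simps)
lemma sscale_1[simp]: "sscale 1 f = f" by (auto simp: sscale_def)
lemma sscale_0[simp]: "sscale 0 f = 0" "sscale c 0 = 0" by (auto simp: sscale_def)
lemma sscale_sum: "sscale c (\<Sum>i\<in>A. F i) = (\<Sum>i\<in>A. sscale c (F i))"
  by (auto simp: sscale_def sum_fun_app sum_distrib_left)
lemma spow_0[simp]: "spow f 0 = sone" by (simp add: spow_def)
lemma spow_Suc: "spow f (Suc k) = smult f (spow f k)" by (simp add: spow_def)
lemma spow_add: "spow f (i + j) = smult (spow f i) (spow f j)"
  by (rule phiI) (simp add: phi_simps power_add)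
lemma spow_sscale: "spow (sscale c f) k = sscale (c ^ k) (spow f k)"
  by (rule phiI) (simp add: phi_simps power_mult_distrib cP_power)


definition mle :: "mono \<Rightarrow> mono \<Rightarrow> bool" where
  "mle x y \<longleftrightarrow> (case x of (n',a',b',c',d') \<Rightarrow> case y of (n,a,b,c,d) \<Rightarrow>
      n'\<le>n \<and> a'\<le>a \<and> b'\<le>b \<and> c'\<le>c \<and> d'\<le>d)"
definition msub :: "mono \<Rightarrow> mono \<Rightarrow> mono" where
  "msub y x = (case x of (n',a',b',c',d') \<Rightarrow> case y of (n,a,b,c,d) \<Rightarrow>
      (n-n', a-a', b-b', c-c', d-d'))"
definition msize :: "mono \<Rightarrow> nat" where "msize x = (case x of (n,a,b,c,d) \<Rightarrow> n+a+b+c+d)"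

lemma mle_simp[simp]: "mle (n',a',b',c',d') (n,a,b,c,d) \<longleftrightarrow> n'\<le>n \<and> a'\<le>a \<and> b'\<le>b \<and> c'\<le>c \<and> d'\<le>d"
  by (simp add: mle_def)
lemma msub_simp[simp]: "msub (n,a,b,c,d) (n',a',b',c',d') = (n-n', a-a', b-b', c-c', d-d')"
  by (simp add: msub_def)
lemma msize_simp[simp]: "msize (n,a,b,c,d) = n+a+b+c+d" by (simp add: msize_def)

lemma mbox_eq: "{p. mle p (n,a,b,c,d)} = {..n} \<times> {..a} \<times> {..b} \<times> {..c} \<times> {..d}"
  by auto
lemma finite_mbox: "finite {p. mle p m}"
  by (cases m) (simp add: mbox_eq)
lemma mle_msub: "mle p m \<Longrightarrow> mle (msub m p) m"
  by (cases m, cases p) auto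
lemma mle_refl: "mle m m" by (cases m) auto
lemma mle_trans: "mle p q \<Longrightarrow> mle q m \<Longrightarrow> mle p m"
  by (cases m, cases p, cases q) auto
lemma mle_size: "mle p m \<Longrightarrow> msize p \<le> msize m"
  by (cases m, cases p) auto

lemma smult_box: "smult f g m = (\<Sum>p\<in>{p. mle p m}. f p * g (msub m p))"
proof -
  obtain n a b c d where m: "m = (n,a,b,c,d)" by (cases m) auto
  show ?thesis unfolding m smult_def mbox_eq prod.case
    by (intro sum.cong) auto
qed

lemma smult_nz: assumes "smult f g m \<noteq> 0"
  shows "\<exists>p. mle p m \<and> f p \<noteq> 0 \<and> g (msub m p) \<noteq> 0"
proof (rule ccontr)
  assume "\<not> ?thesis"
  hence "\<forall>p\<in>{p. mle p m}. f p * g (msub m p) = 0" by auto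
  hence "smult f g m = 0" unfolding smult_box by (rule sum.neutral)
  with assms show False by simp
qed

definition PF :: "('i \<Rightarrow> ser) \<Rightarrow> bool" where "PF F \<longleftrightarrow> (\<forall>m. finite {i. F i m \<noteq> 0})"
definition LF :: "('i \<Rightarrow> ser) \<Rightarrow> bool" where
  "LF F \<longleftrightarrow> (\<forall>m. finite {i. \<exists>p. mle p m \<and> F i p \<noteq> 0})"

lemma PF_D: "PF F \<Longrightarrow> finite {i. F i m \<noteq> 0}" unfolding PF_def by blast
lemma LF_D: "LF F \<Longrightarrow> finite {i. \<exists>p. mle p m \<and> F i p \<noteq> 0}" unfolding LF_def by blast
lemma PF_I: "(\<And>m. finite {i. F i m \<noteq> 0}) \<Longrightarrow> PF F" unfolding PF_def by blast
lemma LF_I: "(\<And>m. finite {i. \<exists>p. mle p m \<and> F i p \<noteq> 0}) \<Longrightarrow> LF F" unfolding LF_def by blast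
lemma LF_PF: "LF F \<Longrightarrow> PF F"
proof (rule PF_I)
  fix m assume "LF F"
  show "finite {i. F i m \<noteq> 0}"
    by (rule finite_subset[OF _ LF_D[OF \<open>LF F\<close>, of m]]) (use mle_refl in blast)
qed

lemma fsum_superset: "finite S \<Longrightarrow> (\<And>i. i \<notin> S \<Longrightarrow> F i m = 0) \<Longrightarrow> fsum F m = (\<Sum>i\<in>S. F i m)"
  unfolding fsum_def by (rule sum.mono_neutral_left) auto

lemma fsum_add: assumes "PF F" "PF G" shows "fsum (\<lambda>i. F i + G i) = fsum F + fsum G"
proof
  fix m
  let ?S = "{i. F i m \<noteq> 0} \<union> {i. G i m \<noteq> 0}"
  have f: "finite ?S" using PF_D[OF assms(1)] PF_D[OF assms(2)] by blast
  have "fsum (\<lambda>i. F i + G i) m = (\<Sum>i\<in>?S. F i m + G i m)" by (subst fsum_superset[OF f]) auto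
  also have "\<dots> = fsum F m + fsum G m"
  proof -
    have e1: "fsum F m = (\<Sum>i\<in>?S. F i m)" by (rule fsum_superset[OF f]) auto
    have e2: "fsum G m = (\<Sum>i\<in>?S. G i m)" by (rule fsum_superset[OF f]) auto
    show ?thesis by (simp add: e1 e2 sum.distrib)
  qed
  finally show "fsum (\<lambda>i. F i + G i) m = (fsum F + fsum G) m" by simp
qed

lemma fsum_diff: assumes "PF F" "PF G" shows "fsum (\<lambda>i. F i - G i) = fsum F - fsum G"
proof
  fix m
  let ?S = "{i. F i m \<noteq> 0} \<union> {i. G i m \<noteq> 0}"
  have f: "finite ?S" using PF_D[OF assms(1)] PF_D[OF assms(2)] by blast
  have "fsum (\<lambda>i. F i - G i) m = (\<Sum>i\<in>?S. F i m - G i m)" by (subst fsum_superset[OF f]) auto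
  also have "\<dots> = fsum F m - fsum G m"
  proof -
    have e1: "fsum F m = (\<Sum>i\<in>?S. F i m)" by (rule fsum_superset[OF f]) auto
    have e2: "fsum G m = (\<Sum>i\<in>?S. G i m)" by (rule fsum_superset[OF f]) auto
    show ?thesis by (simp add: e1 e2 sum_subtractf)
  qed
  finally show "fsum (\<lambda>i. F i - G i) m = (fsum F - fsum G) m" by simp
qed

lemma fsum_sscale: assumes "PF F" shows "fsum (\<lambda>i. sscale c (F i)) = sscale c (fsum F)"
proof
  fix m
  let ?S = "{i. F i m \<noteq> 0}"
  have f: "finite ?S" using PF_D[OF assms] by blast
  have e1: "fsum F m = (\<Sum>i\<in>?S. F i m)" by (rule fsum_superset[OF f]) auto
  have e2: "fsum (\<lambda>i. sscale c (F i)) m = (\<Sum>i\<in>?S. sscale c (F i) m)"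
    by (rule fsum_superset[OF f, of "\<lambda>i. sscale c (F i)"]) (auto simp: sscale_def)
  show "fsum (\<lambda>i. sscale c (F i)) m = sscale c (fsum F) m"
    unfolding e2 by (simp add: sscale_def e1 sum_distrib_left)
qed

lemma fsum_zero[simp]: "fsum (\<lambda>i. 0) = 0"
  by (auto simp: fsum_def)

lemma fsum_finite: assumes "finite A" "\<And>i. i \<notin> A \<Longrightarrow> F i = 0"
  shows "fsum F = (\<Sum>i\<in>A. F i)"
proof
  fix m show "fsum F m = sum F A m"
    by (simp add: sum_fun_app fsum_superset[OF assms(1)] assms(2))
qed

lemma fsum_cong: "(\<And>i. F i = G i) \<Longrightarrow> fsum F = fsum G" by metis

lemma PF_add: "PF F \<Longrightarrow> PF G \<Longrightarrow> PF (\<lambda>i. F i + G i)"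
  unfolding PF_def
proof
  fix m assume a: "\<forall>m. finite {i. F i m \<noteq> 0}" "\<forall>m. finite {i. G i m \<noteq> 0}"
  show "finite {i. (F i + G i) m \<noteq> 0}"
    by (rule finite_subset[of _ "{i. F i m \<noteq> 0} \<union> {i. G i m \<noteq> 0}"]) (use a in \<open>auto simp del: split_paired_All\<close>)
qed

lemma LF_mono: assumes "LF G" "\<And>i m. F i m \<noteq> 0 \<Longrightarrow> G i m \<noteq> 0" shows "LF F"
proof (rule LF_I)
  fix m show "finite {i. \<exists>p. mle p m \<and> F i p \<noteq> 0}"
    by (rule finite_subset[OF _ LF_D[OF assms(1), of m]]) (use assms(2) in blast)
qed
lemma PF_mono: assumes "PF G" "\<And>i m. F i m \<noteq> 0 \<Longrightarrow> G i m \<noteq> 0" shows "PF F"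
proof (rule PF_I)
  fix m show "finite {i. F i m \<noteq> 0}"
    by (rule finite_subset[OF _ PF_D[OF assms(1), of m]]) (use assms(2) in blast)
qed

lemma fsum_smult: assumes "LF F" shows "smult g (fsum F) = fsum (\<lambda>i. smult g (F i))"
proof
  fix m
  let ?S = "{i. \<exists>p. mle p m \<and> F i p \<noteq> 0}"
  have f: "finite ?S" using LF_D[OF assms] by blast
  have "smult g (fsum F) m = (\<Sum>p\<in>{p. mle p m}. g p * (\<Sum>i\<in>?S. F i (msub m p)))"
    unfolding smult_box
    by (intro sum.cong refl arg_cong2[where f="(*)"] fsum_superset[OF f])
       (use mle_msub in blast)
  also have "\<dots> = (\<Sum>i\<in>?S. smult g (F i) m)"
    by (simp add: smult_box sum_distrib_left sum.swap[where A="{p. mle p m}"])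
  also have "\<dots> = fsum (\<lambda>i. smult g (F i)) m"
  proof (rule fsum_superset[symmetric, OF f])
    fix i assume "i \<notin> ?S"
    thus "smult g (F i) m = 0" using smult_nz mle_msub by blast
  qed
  finally show "smult g (fsum F) m = fsum (\<lambda>i. smult g (F i)) m" .
qed

lemma fsum_smult_right: assumes "LF F" shows "smult (fsum F) g = fsum (\<lambda>i. smult (F i) g)"
  using fsum_smult[OF assms, of g] by (simp add: smult_comm)

lemma fsum_fsum: assumes "PF (\<lambda>(i,j). F i j)"
  shows "fsum (\<lambda>i. fsum (F i)) = fsum (\<lambda>(i,j). F i j)"
proof
  fix m
  let ?U = "{ij. (case ij of (i,j) \<Rightarrow> F i j) m \<noteq> 0}"
  have fU: "finite ?U" using PF_D[OF assms] by blast
  let ?S1 = "fst ` ?U" and ?S2 = "snd ` ?U"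
  have f1: "finite ?S1" and f2: "finite ?S2" using fU by auto
  have U: "F i j m \<noteq> 0 \<Longrightarrow> i \<in> ?S1 \<and> j \<in> ?S2" for i j
    by (metis (mono_tags, lifting) case_prod_conv fst_conv image_eqI mem_Collect_eq snd_conv)
  have in2: "fsum (F i) m = (\<Sum>j\<in>?S2. F i j m)" for i
    by (rule fsum_superset[OF f2]) (use U in blast)
  have "fsum (\<lambda>i. fsum (F i)) m = (\<Sum>i\<in>?S1. fsum (F i) m)"
  proof (rule fsum_superset[OF f1])
    fix i assume "i \<notin> ?S1"
    hence "\<forall>j\<in>?S2. F i j m = 0" using U by blast
    thus "fsum (F i) m = 0" unfolding in2 by (intro sum.neutral) blast
  qed
  also have "\<dots> = (\<Sum>ij\<in>?S1 \<times> ?S2. (case ij of (i,j) \<Rightarrow> F i j) m)"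
    by (simp add: in2 sum.cartesian_product split_def)
  also have "\<dots> = fsum (\<lambda>(i,j). F i j) m"
  proof (rule fsum_superset[symmetric])
    show "finite (?S1 \<times> ?S2)" using f1 f2 by simp
    fix ij assume "ij \<notin> ?S1 \<times> ?S2"
    thus "(case ij of (i,j) \<Rightarrow> F i j) m = 0" using U by (cases ij) auto
  qed
  finally show "fsum (\<lambda>i. fsum (F i)) m = fsum (\<lambda>(i,j). F i j) m" .
qed

lemma fsum_reindex:
  assumes "\<And>i. i \<notin> A \<Longrightarrow> F i = 0" "\<And>j. j \<notin> B \<Longrightarrow> G j = 0"
    "\<And>i. i \<in> A \<Longrightarrow> h i \<in> B \<and> k (h i) = i" "\<And>j. j \<in> B \<Longrightarrow> k j \<in> A \<and> h (k j) = j"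
    "\<And>i. i \<in> A \<Longrightarrow> G (h i) = F i"
  shows "fsum F = fsum G"
proof
  fix m
  show "fsum F m = fsum G m" unfolding fsum_def
  proof (rule sum.reindex_bij_witness[where i=k and j=h])
    fix i assume "i \<in> {i. F i m \<noteq> 0}"
    hence "i \<in> A" using assms(1) by fastforce
    thus "k (h i) = i" "h i \<in> {j. G j m \<noteq> 0}" "G (h i) m = F i m"
      using assms(3,5) \<open>i \<in> {i. F i m \<noteq> 0}\<close> by auto
  next
    fix j assume "j \<in> {j. G j m \<noteq> 0}"
    hence "j \<in> B" using assms(2) by fastforce
    thus "h (k j) = j" "k j \<in> {i. F i m \<noteq> 0}"
      using assms(4,5) \<open>j \<in> {j. G j m \<noteq> 0}\<close> by (auto, metis)
  qed
qed

definition Low :: "ser \<Rightarrow> nat \<Rightarrow> nat \<Rightarrow> bool" where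
  "Low f q d \<longleftrightarrow> (\<forall>n a b c e. f (n,a,b,c,e) \<noteq> 0 \<longrightarrow> q \<le> n \<and> d \<le> a+b+c+e)"

lemma LF_by:
  assumes "\<And>i. i \<notin> I \<Longrightarrow> F i = 0" "\<And>i. i \<in> I \<Longrightarrow> Low (F i) (q i) (d i)"
    "\<And>N. finite {i\<in>I. q i + d i \<le> N}"
  shows "LF F"
  unfolding LF_def
proof
  fix m
  show "finite {i. \<exists>p. mle p m \<and> F i p \<noteq> 0}"
  proof (rule finite_subset[OF _ assms(3)[of "msize m"]], safe)
    fix i p assume p: "mle p m" "F i p \<noteq> 0"
    show "i \<in> I" using p assms(1) by fastforce
    obtain n a b c e where pp: "p = (n,a,b,c,e)" by (cases p) auto
    have "q i \<le> n \<and> d i \<le> a+b+c+e" using assms(2)[OF \<open>i\<in>I\<close>] p(2) unfolding Low_def pp by blast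
    thus "q i + d i \<le> msize m" using mle_size[OF p(1)] pp by simp
  qed
qed

lemma Low_I: "(\<And>n a b c e. f (n,a,b,c,e) \<noteq> 0 \<Longrightarrow> q \<le> n \<and> d \<le> a+b+c+e) \<Longrightarrow> Low f q d"
  unfolding Low_def by blast
lemma Low_D: "Low f q d \<Longrightarrow> f (n,a,b,c,e) \<noteq> 0 \<Longrightarrow> q \<le> n \<and> d \<le> a+b+c+e"
  unfolding Low_def by blast
lemma Low_zero[simp]: "Low 0 q d" by (rule Low_I) simp
lemma Low_mono: "Low f q d \<Longrightarrow> q' \<le> q \<Longrightarrow> d' \<le> d \<Longrightarrow> Low f q' d'"
  by (rule Low_I) (drule (1) Low_D, linarith)
lemma Low_add: assumes "Low f q d" "Low g q d" shows "Low (f + g) q d"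
proof (rule Low_I)
  fix n a b c e assume "(f + g) (n,a,b,c,e) \<noteq> 0"
  hence "f (n,a,b,c,e) \<noteq> 0 \<or> g (n,a,b,c,e) \<noteq> 0" by auto
  thus "q \<le> n \<and> d \<le> a+b+c+e" using Low_D[OF assms(1)] Low_D[OF assms(2)] by blast
qed
lemma Low_diff: assumes "Low f q d" "Low g q d" shows "Low (f - g) q d"
proof (rule Low_I)
  fix n a b c e assume "(f - g) (n,a,b,c,e) \<noteq> 0"
  hence "f (n,a,b,c,e) \<noteq> 0 \<or> g (n,a,b,c,e) \<noteq> 0" by auto
  thus "q \<le> n \<and> d \<le> a+b+c+e" using Low_D[OF assms(1)] Low_D[OF assms(2)] by blast
qed
lemma Low_uminus: assumes "Low f q d" shows "Low (- f) q d"
proof (rule Low_I)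
  fix n a b c e assume "(- f) (n,a,b,c,e) \<noteq> 0"
  hence "f (n,a,b,c,e) \<noteq> 0" by auto
  thus "q \<le> n \<and> d \<le> a+b+c+e" using Low_D[OF assms(1)] by blast
qed
lemma Low_sscale: assumes "Low f q d" shows "Low (sscale c f) q d"
proof (rule Low_I)
  fix n a b c' e assume "sscale c f (n,a,b,c',e) \<noteq> 0"
  hence "f (n,a,b,c',e) \<noteq> 0" by (auto simp: sscale_def)
  thus "q \<le> n \<and> d \<le> a+b+c'+e" using Low_D[OF assms(1)] by blast
qed
lemma Low_sone: "Low sone 0 0" by (rule Low_I) (simp add: sone_def)
lemma Low_smult: assumes "Low f q1 d1" "Low g q2 d2" shows "Low (smult f g) (q1+q2) (d1+d2)"
  unfolding Low_def
proof (intro allI impI)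
  fix n a b c e assume "smult f g (n,a,b,c,e) \<noteq> 0"
  then obtain p where p: "mle p (n,a,b,c,e)" "f p \<noteq> 0" "g (msub (n,a,b,c,e) p) \<noteq> 0"
    using smult_nz by blast
  obtain n' a' b' c' e' where pp: "p = (n',a',b',c',e')" by (cases p) auto
  have h1: "q1 \<le> n' \<and> d1 \<le> a'+b'+c'+e'" using Low_D[OF assms(1)] p(2) pp by blast
  have h2: "q2 \<le> n-n' \<and> d2 \<le> (a-a')+(b-b')+(c-c')+(e-e')" using Low_D[OF assms(2)] p(3) pp by simp
  show "q1 + q2 \<le> n \<and> d1 + d2 \<le> a + b + c + e"
    using h1 h2 p(1) pp by simp linarith
qed
lemma Low_spow: "Low f q d \<Longrightarrow> Low (spow f k) (k*q) (k*d)"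
  by (induction k) (simp_all add: Low_sone spow_Suc Low_smult)
lemma Low_fsum: assumes "\<And>i. Low (F i) q d" shows "Low (fsum F) q d"
proof (rule Low_I)
  fix n a b c e assume "fsum F (n,a,b,c,e) \<noteq> 0"
  then obtain i where "F i (n,a,b,c,e) \<noteq> 0" unfolding fsum_def by (metis (mono_tags, lifting) mem_Collect_eq sum.neutral)
  thus "q \<le> n \<and> d \<le> a+b+c+e" using Low_D assms by blast
qed
lemma Low_sum: "(\<And>i. i \<in> A \<Longrightarrow> Low (F i) q d) \<Longrightarrow> Low (\<Sum>i\<in>A. F i) q d"
  by (induction A rule: infinite_finite_induct) (auto intro: Low_add)

lemma fsum_prod: assumes "LF F" "LF G"
  shows "smult (fsum F) (fsum G) = fsum (\<lambda>(i,j). smult (F i) (G j))"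
proof -
  have "smult (fsum F) (fsum G) = fsum (\<lambda>i. fsum (\<lambda>j. smult (F i) (G j)))"
    unfolding fsum_smult_right[OF assms(1)] by (rule fsum_cong) (rule fsum_smult[OF assms(2)])
  also have "\<dots> = fsum (\<lambda>(i,j). smult (F i) (G j))"
  proof (rule fsum_fsum, unfold PF_def, rule allI)
    fix m
    show "finite {ij. (case ij of (i, j) \<Rightarrow> smult (F i) (G j)) m \<noteq> 0}"
    proof (rule finite_subset[of _ "{i. \<exists>p. mle p m \<and> F i p \<noteq> 0} \<times> {j. \<exists>p. mle p m \<and> G j p \<noteq> 0}"])
      show "finite ({i. \<exists>p. mle p m \<and> F i p \<noteq> 0} \<times> {j. \<exists>p. mle p m \<and> G j p \<noteq> 0})"
        using LF_D[OF assms(1)] LF_D[OF assms(2)] by blast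
    qed (auto dest!: smult_nz intro: mle_msub simp del: split_paired_Ex)
  qed
  finally show ?thesis .
qed


definition NC :: "ser \<Rightarrow> bool" where "NC Z \<longleftrightarrow> Low Z 0 1"
definition sub :: "ser \<Rightarrow> rat fps \<Rightarrow> ser" where
  "sub D f = fsum (\<lambda>k. sscale (f $ k) (spow D k))"
definition sexp :: "ser \<Rightarrow> ser" where "sexp Z = sub Z (fps_exp 1)"
definition ex :: "ser \<Rightarrow> nat \<Rightarrow> ser" where "ex Z v = sexp (sscale (of_nat v) Z)"

lemma NC_add: "NC A \<Longrightarrow> NC B \<Longrightarrow> NC (A + B)" by (simp add: NC_def Low_add)
lemma NC_diff: "NC A \<Longrightarrow> NC B \<Longrightarrow> NC (A - B)" by (simp add: NC_def Low_diff)
lemma NC_uminus: "NC A \<Longrightarrow> NC (- A)" by (simp add: NC_def Low_uminus)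
lemma NC_sscale: "NC A \<Longrightarrow> NC (sscale c A)" by (simp add: NC_def Low_sscale)
lemma NC_zero: "NC 0" by (simp add: NC_def)

lemma LF_pow: assumes "NC D" shows "LF (\<lambda>k. sscale (c k) (spow D k))"
proof (rule LF_by[where I=UNIV and q="\<lambda>_. 0" and d="\<lambda>k. k"])
  fix k show "Low (sscale (c k) (spow D k)) 0 k"
    using Low_spow[of D 0 1 k] assms by (simp add: NC_def Low_sscale)
qed auto

lemma sscale_sum_left: "(\<Sum>i\<in>A. sscale (c i) X) = sscale (\<Sum>i\<in>A. c i) X"
  by (induction A rule: infinite_finite_induct) (simp_all add: sscale_add2)

lemma fsum_regroup: fixes H :: "nat \<Rightarrow> nat \<Rightarrow> ser" assumes "PF (\<lambda>(i,j). H i j)"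
  shows "fsum (\<lambda>(i,j). H i j) = fsum (\<lambda>k. \<Sum>i\<le>k. H i (k - i))"
proof -
  let ?K = "\<lambda>(k::nat,i::nat). if i \<le> k then H i (k - i) else 0"
  have "fsum (\<lambda>(i,j). H i j) = fsum ?K"
    by (rule fsum_reindex[where A=UNIV and B="{(k,i). i \<le> k}" and h="\<lambda>(i,j). (i+j, i)"
          and k="\<lambda>(k,i). (i, k - i)"]) auto
  also have "\<dots> = fsum (\<lambda>k. fsum (\<lambda>i. if i \<le> k then H i (k - i) else 0))"
  proof (rule fsum_fsum[symmetric], rule PF_I)
    fix m
    have "{ki. (case ki of (k, i) \<Rightarrow> if i \<le> k then H i (k - i) else 0) m \<noteq> 0}
          \<subseteq> (\<lambda>(i,j). (i+j, i)) ` {ij. (case ij of (i,j) \<Rightarrow> H i j) m \<noteq> 0}"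
    proof
      fix ki assume a: "ki \<in> {ki. (case ki of (k, i) \<Rightarrow> if i \<le> k then H i (k - i) else 0) m \<noteq> 0}"
      obtain k i where ki: "ki = (k,i)" by (cases ki)
      have "i \<le> k" "H i (k - i) m \<noteq> 0" using a ki by (auto split: if_splits)
      thus "ki \<in> (\<lambda>(i,j). (i+j, i)) ` {ij. (case ij of (i,j) \<Rightarrow> H i j) m \<noteq> 0}"
        using ki by (auto intro!: image_eqI[where x="(i, k-i)"])
    qed
    moreover have "finite {ij. (case ij of (i,j) \<Rightarrow> H i j) m \<noteq> 0}" using PF_D[OF assms] by blast
    ultimately show "finite {ki. (case ki of (k, i) \<Rightarrow> if i \<le> k then H i (k - i) else 0) m \<noteq> 0}"
      using finite_subset by blast
  qed
  also have "\<dots> = fsum (\<lambda>k. \<Sum>i\<le>k. H i (k - i))"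
    by (rule fsum_cong, subst fsum_finite[where A="{..k}" for k]) auto
  finally show ?thesis .
qed

lemma sub_add: assumes "NC D" shows "sub D (f + g) = sub D f + sub D g"
  unfolding sub_def
  by (subst fsum_add[symmetric]) (auto intro: LF_PF LF_pow assms simp: sscale_add2)
lemma sub_diff: assumes "NC D" shows "sub D (f - g) = sub D f - sub D g"
proof -
  have "sub D (f - g) = fsum (\<lambda>k. sscale (f $ k) (spow D k) - sscale (g $ k) (spow D k))"
    unfolding sub_def by (rule fsum_cong) (auto simp: sscale_def algebra_simps)
  also have "\<dots> = sub D f - sub D g"
    unfolding sub_def by (rule fsum_diff) (auto intro: LF_PF LF_pow assms)
  finally show ?thesis .
qed
lemma sub_const: "sub D (fps_const c) = sscale c sone"
  unfolding sub_def by (subst fsum_finite[where A="{0}"]) auto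
lemma sub_1: "sub D 1 = sone"
  using sub_const[of D 1] by simp
lemma sub_X: "sub D fps_X = D"
  unfolding sub_def by (subst fsum_finite[where A="{1}"]) (auto simp: fps_X_def spow_Suc)

lemma sub_mult: assumes "NC D" shows "sub D (f * g) = smult (sub D f) (sub D g)"
proof -
  let ?H = "\<lambda>i j. sscale (f $ i * g $ j) (spow D (i + j))"
  have "smult (sub D f) (sub D g) = fsum (\<lambda>(i,j). smult (sscale (f $ i) (spow D i)) (sscale (g $ j) (spow D j)))"
    unfolding sub_def by (rule fsum_prod) (auto intro: LF_pow assms)
  also have "\<dots> = fsum (\<lambda>(i,j). ?H i j)"
    by (rule fsum_cong) (auto simp: smult_sscale sscale_sscale spow_add mult.commute)
  also have "\<dots> = fsum (\<lambda>k. \<Sum>i\<le>k. ?H i (k - i))"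
  proof (rule fsum_regroup)
    have "LF (\<lambda>(i,j). ?H i j)"
    proof (rule LF_by[where I=UNIV and q="\<lambda>_. 0" and d="\<lambda>(i,j). i+j"])
      fix ij :: "nat \<times> nat"
      obtain i j where ij: "ij = (i,j)" by (cases ij)
      show "Low ((\<lambda>(i,j). ?H i j) ij) 0 ((\<lambda>(i,j). i+j) ij)"
        using Low_spow[of D 0 1 "i+j"] assms unfolding ij by (simp add: NC_def Low_sscale)
    next
      fix N :: nat
      show "finite {ij \<in> UNIV. 0 + (\<lambda>(i,j). i+j) ij \<le> N}"
        by (rule finite_subset[of _ "{..N} \<times> {..N}"]) auto
    qed auto
    thus "PF (\<lambda>(i,j). ?H i j)" by (rule LF_PF)
  qed
  also have "\<dots> = sub D (f * g)"
    unfolding sub_def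
    by (rule fsum_cong) (simp add: sscale_sum_left fps_mult_nth atLeast0AtMost)
  finally show ?thesis ..
qed
lemma spow_zero_Suc: "spow 0 (Suc k) = 0" by (simp add: spow_Suc)

lemma sexp_0: "sexp 0 = sone"
  unfolding sexp_def sub_def
proof (subst fsum_finite[where A="{0}"])
  fix i :: nat assume "i \<notin> {0}"
  then obtain k where "i = Suc k" by (cases i) auto
  thus "sscale (fps_exp 1 $ i) (spow 0 i) = 0" by (simp add: spow_zero_Suc)
qed auto

lemma binom_coeff: "k \<le> n \<Longrightarrow> (of_nat (n choose k) :: rat) / fact n = 1 / (fact k * fact (n - k))"
  by (simp add: binomial_fact)

lemma spow_binom: "sscale (1 / fact k) (spow (A + B) k) =
   (\<Sum>i\<le>k. sscale (1 / fact i * (1 / fact (k - i))) (smult (spow A i) (spow B (k - i))))"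
proof (rule phiI)
  have "phi (sscale (1 / fact k) (spow (A + B) k)) =
     cP (1 / fact k) * (\<Sum>i\<le>k. of_nat (k choose i) * phi A ^ i * phi B ^ (k - i))"
    by (simp add: phi_simps binomial_ring)
  also have "\<dots> = (\<Sum>i\<le>k. cP (1 / fact k * of_nat (k choose i)) * (phi A ^ i * phi B ^ (k - i)))"
    by (unfold sum_distrib_left, intro sum.cong refl, unfold cP_mult cP_of_nat, simp only: mult.assoc)
  also have "\<dots> = (\<Sum>i\<le>k. cP (1 / fact i * (1 / fact (k - i))) * (phi A ^ i * phi B ^ (k - i)))"
    by (rule sum.cong) (simp_all add: binom_coeff)
  also have "\<dots> = phi (\<Sum>i\<le>k. sscale (1 / fact i * (1 / fact (k - i))) (smult (spow A i) (spow B (k - i))))"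
    by (simp add: phi_simps)
  finally show "phi (sscale (1 / fact k) (spow (A + B) k)) = \<dots>" .
qed

lemma sexp_add: assumes "NC A" "NC B" shows "sexp (A + B) = smult (sexp A) (sexp B)"
proof -
  let ?H = "\<lambda>i j. sscale (1 / fact i * (1 / fact j)) (smult (spow A i) (spow B j))"
  have "smult (sexp A) (sexp B) = fsum (\<lambda>(i,j). smult (sscale (fps_exp 1 $ i) (spow A i)) (sscale (fps_exp 1 $ j) (spow B j)))"
    unfolding sexp_def sub_def by (rule fsum_prod) (auto intro: LF_pow assms)
  also have "\<dots> = fsum (\<lambda>(i,j). ?H i j)"
    by (rule fsum_cong) (auto simp: smult_sscale sscale_sscale mult.commute)
  also have "\<dots> = fsum (\<lambda>k. \<Sum>i\<le>k. ?H i (k - i))"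
  proof (rule fsum_regroup)
    have "LF (\<lambda>(i,j). ?H i j)"
    proof (rule LF_by[where I=UNIV and q="\<lambda>_. 0" and d="\<lambda>(i,j). i+j"])
      fix ij :: "nat \<times> nat"
      obtain i j where ij: "ij = (i,j)" by (cases ij)
      have "Low (smult (spow A i) (spow B j)) (i*0 + j*0) (i*1+j*1)"
        by (rule Low_smult; rule Low_spow) (use assms in \<open>simp_all add: NC_def\<close>)
      thus "Low ((\<lambda>(i,j). ?H i j) ij) 0 ((\<lambda>(i,j). i+j) ij)"
        unfolding ij by (simp add: Low_sscale)
    next
      fix N :: nat
      show "finite {ij \<in> UNIV. 0 + (\<lambda>(i,j). i+j) ij \<le> N}"
        by (rule finite_subset[of _ "{..N} \<times> {..N}"]) auto
    qed auto
    thus "PF (\<lambda>(i,j). ?H i j)" by (rule LF_PF)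
  qed
  also have "\<dots> = sexp (A + B)"
    unfolding sexp_def sub_def
    by (rule fsum_cong) (simp add: spow_binom)
  finally show ?thesis ..
qed

lemma sscale_add_distrib: "sscale c (A + B) = sscale c A + sscale c B" by (rule sscale_add)

lemma ex_0: "ex A 0 = sone"
  by (simp add: ex_def sexp_0)
lemma ex_add_var: assumes "NC A" "NC B" shows "ex (A + B) v = smult (ex A v) (ex B v)"
  unfolding ex_def sscale_add by (rule sexp_add) (use assms in \<open>auto intro: NC_sscale\<close>)
lemma ex_add_n: assumes "NC A" shows "ex A (v + w) = smult (ex A v) (ex A w)"
  unfolding ex_def of_nat_add sscale_add2 by (rule sexp_add) (use assms in \<open>auto intro: NC_sscale\<close>)
lemma ex_pow: assumes "NC A" shows "ex A n = spow (ex A 1) n"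
proof (induction n)
  case 0 thus ?case by (simp add: ex_0)
next
  case (Suc n)
  have "ex A (Suc n) = smult (ex A 1) (ex A n)" using ex_add_n[OF assms, of 1 n] by simp
  thus ?case using Suc by (simp only: spow_Suc)
qed
lemma ex_expand: "ex Z v = fsum (\<lambda>e. sscale (of_nat v ^ e / fact e) (spow Z e))"
  unfolding ex_def sexp_def sub_def by (rule fsum_cong) (simp add: spow_sscale sscale_sscale)


definition bern :: "rat fps" where "bern = fps_X / (fps_exp 1 - 1)"

lemma subdeg_E1: "subdegree (fps_exp (1::rat) - 1) = 1"
  by (rule subdegreeI) auto

lemma bern_eq: "bern * (fps_exp 1 - 1) = fps_X"
  unfolding bern_def
proof (rule fps_times_divide_eq)
  show "fps_exp (1::rat) - 1 \<noteq> 0"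
  proof
    assume "fps_exp (1::rat) - 1 = 0"
    hence "(fps_exp (1::rat) - 1) $ 1 = 0" by simp
    thus False by simp
  qed
  show "subdegree (fps_exp (1::rat) - 1) \<le> subdegree (fps_X :: rat fps)" by (simp only: subdeg_E1 subdegree_fps_X order.refl)
qed

lemma bern0: "bern $ 0 = 1"
proof -
  have "(bern * (fps_exp 1 - 1)) $ 1 = 1" by (simp add: bern_eq)
  thus ?thesis by simp
qed

lemma bernoulli_bern: "bernoulli k / fact k = bern $ k"
  by (simp add: bernoulli_def bern_def)

lemma X_shift: "fps_X * fps_shift 1 bern = bern - 1"
  by (rule fps_ext) (simp add: bern0)

lemma G_eq: assumes "NC D" shows "smult (sub D bern) (sexp D - sone) = D"
proof -
  have "sexp D - sone = sub D (fps_exp 1 - 1)" by (simp add: sexp_def sub_diff[OF assms] sub_1)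
  thus ?thesis by (simp add: sub_mult[OF assms, symmetric] bern_eq sub_X)
qed

lemma beta_eq: assumes "NC D" shows "smult D (sub D (fps_shift 1 bern)) = sub D bern - sone"
proof -
  have "smult D (sub D (fps_shift 1 bern)) = sub D (fps_X * fps_shift 1 bern)"
    by (simp add: sub_mult[OF assms] sub_X)
  thus ?thesis unfolding X_shift sub_diff[OF assms] sub_1 .
qed

lemma sexp_neg: assumes "NC D" shows "smult (sexp D) (sexp (- D)) = sone"
  using sexp_add[OF assms NC_uminus[OF assms]] by (simp add: sexp_0)

lemma uminus_sscale: "- D = sscale (-1) D" by (auto simp: sscale_def)

lemma Low_triv: "Low f 0 0" by (simp add: Low_def)

lemma LF_shift: assumes "NC D"
  shows "LF (\<lambda>k. if k = 0 then 0 else smult (sscale (c k) (spow D (k - 1))) T)"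
proof (rule LF_by[where I="{k. k \<noteq> 0}" and q="\<lambda>_. 0" and d="\<lambda>k. k - 1"])
  fix k assume "k \<in> {k::nat. k \<noteq> 0}"
  have "Low (smult (sscale (c k) (spow D (k - 1))) T) ((k-1)*0 + 0) ((k-1)*1 + 0)"
    by (rule Low_smult[OF Low_sscale[OF Low_spow] Low_triv]) (use assms in \<open>simp add: NC_def\<close>)
  thus "Low (if k = 0 then 0 else smult (sscale (c k) (spow D (k - 1))) T) 0 (k - 1)" by simp
next
  fix N :: nat show "finite {k \<in> {k. k \<noteq> 0}. 0 + (k - 1) \<le> N}"
    by (rule finite_subset[of _ "{..Suc N}"]) auto
qed auto

lemma shift_sum: assumes "NC D"
  shows "fsum (\<lambda>k. if k = 0 then 0 else smult (sscale (bern $ k) (spow D (k - 1))) T)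
     = smult (sub D (fps_shift 1 bern)) T"
proof -
  have "fsum (\<lambda>k. if k = 0 then 0 else smult (sscale (bern $ k) (spow D (k - 1))) T)
     = fsum (\<lambda>j. smult (sscale (bern $ Suc j) (spow D j)) T)"
    by (rule fsum_reindex[where A="{k. k \<noteq> 0}" and B=UNIV and h="\<lambda>k. k - 1" and k=Suc]) auto
  also have "\<dots> = smult (sub D (fps_shift 1 bern)) T"
    unfolding sub_def by (subst fsum_smult_right) (auto intro: LF_pow assms)
  finally show ?thesis .
qed

lemma bern_sum: assumes "NC D"
  shows "fsum (\<lambda>k::nat. if k = 0 then 0 else
                sscale (bernoulli k / fact k)
                  (smult (spow D (k - 1)) (T1 + sscale ((-1) ^ (k - 1)) T2)))
       = smult (sub D (fps_shift 1 bern)) T1 + smult (sub (- D) (fps_shift 1 bern)) T2"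
proof -
  have "fsum (\<lambda>k::nat. if k = 0 then 0 else
                sscale (bernoulli k / fact k)
                  (smult (spow D (k - 1)) (T1 + sscale ((-1) ^ (k - 1)) T2)))
     = fsum (\<lambda>k. (if k = 0 then 0 else smult (sscale (bern $ k) (spow D (k - 1))) T1)
             + (if k = 0 then 0 else smult (sscale (bern $ k) (spow (- D) (k - 1))) T2))"
    by (rule fsum_cong)
       (simp add: bernoulli_bern smult_add smult_sscale sscale_add sscale_sscale uminus_sscale spow_sscale
          mult.commute)
  also have "\<dots> = fsum (\<lambda>k. if k = 0 then 0 else smult (sscale (bern $ k) (spow D (k - 1))) T1)
      + fsum (\<lambda>k. if k = 0 then 0 else smult (sscale (bern $ k) (spow (- D) (k - 1))) T2)"
    by (rule fsum_add) (intro LF_PF LF_shift assms NC_uminus)+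
  also have "\<dots> = smult (sub D (fps_shift 1 bern)) T1 + smult (sub (- D) (fps_shift 1 bern)) T2"
    by (simp add: shift_sum assms NC_uminus)
  finally show ?thesis .
qed


definition Sg :: "'a::comm_ring_1 \<Rightarrow> 'a \<Rightarrow> nat \<Rightarrow> 'a" where
  "Sg E1 E2 n = (\<Sum>i\<in>{1..<n}. E1 ^ i * E2 ^ (n - i))"

lemma Sg_Suc: "1 \<le> n \<Longrightarrow> Sg E1 E2 (Suc n) = Sg E1 E2 n * E2 + E1 ^ n * E2"
proof -
  assume n: "1 \<le> n"
  have "Sg E1 E2 (Suc n) = (\<Sum>i\<in>{1..<n}. E1 ^ i * E2 ^ (Suc n - i)) + E1 ^ n * E2 ^ (Suc n - n)"
    unfolding Sg_def using n by (simp add: atLeastLessThanSuc)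
  also have "(\<Sum>i\<in>{1..<n}. E1 ^ i * E2 ^ (Suc n - i)) = (\<Sum>i\<in>{1..<n}. E1 ^ i * E2 ^ (n - i)) * E2"
    unfolding sum_distrib_right by (rule sum.cong) (simp_all add: Suc_diff_le ac_simps)
  finally show ?thesis by (simp add: Sg_def)
qed

lemma tele: "1 \<le> n \<Longrightarrow> (E1 - E2) * Sg E1 E2 n = E1 ^ n * E2 - E1 * E2 ^ n"
proof (induction n rule: dec_induct)
  case base thus ?case by (simp add: Sg_def)
next
  case (step n)
  have "(E1 - E2) * Sg E1 E2 (Suc n) = ((E1 - E2) * Sg E1 E2 n) * E2 + (E1 - E2) * E1 ^ n * E2"
    using step(1) by (simp add: Sg_Suc algebra_simps)
  also have "\<dots> = (E1 ^ n * E2 - E1 * E2 ^ n) * E2 + (E1 - E2) * E1 ^ n * E2"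
    using step(3) by simp
  also have "\<dots> = E1 ^ Suc n * E2 - E1 * E2 ^ Suc n"
    by (simp add: algebra_simps)
  finally show ?case .
qed

lemma key_alg:
  fixes E1 E2 eD e' G G' b b' d :: "'a::idom"
  assumes h1: "E1 = E2 * eD" and h2: "G * (eD - 1) = d" and h3: "G' * (e' - 1) = - d"
    and h4: "e' * eD = 1" and h5: "d * b = G - 1" and h6: "(- d) * b' = G' - 1"
    and nz: "d \<noteq> 0" "E2 \<noteq> 0" "eD \<noteq> 1" and n: "1 \<le> n"
  shows "d * (Sg E1 E2 n - b * E1 ^ n - b' * E2 ^ n) = E1 ^ n - E2 ^ n"
proof -
  have c1: "E2 * (eD - 1) \<noteq> 0" using nz by simp
  have A: "E2 * (eD - 1) * (d * Sg E1 E2 n) = d * (E1 ^ n * E2 - E1 * E2 ^ n)"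
  proof -
    have "E2 * (eD - 1) = E1 - E2" using h1 by (simp add: algebra_simps)
    hence "E2 * (eD - 1) * (d * Sg E1 E2 n) = d * ((E1 - E2) * Sg E1 E2 n)" by (simp add: algebra_simps)
    thus ?thesis by (simp only: tele[OF n])
  qed
  have g': "G' * (eD - 1) = eD * d"
  proof -
    have "eD - 1 = - eD * (e' - 1)" using h4 by (simp add: algebra_simps)
    hence "G' * (eD - 1) = - eD * (G' * (e' - 1))" by (simp add: algebra_simps)
    thus ?thesis using h3 by simp
  qed
  have B: "E2 * (eD - 1) * (G * E1 ^ n - G' * E2 ^ n) = d * (E1 ^ n * E2 - E1 * E2 ^ n)"
  proof -
    have "E2 * (eD - 1) * (G * E1 ^ n - G' * E2 ^ n) = E2 * (G * (eD - 1)) * E1 ^ n - E2 * (G' * (eD - 1)) * E2 ^ n"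
      by (simp add: algebra_simps)
    also have "\<dots> = E2 * d * E1 ^ n - (E2 * eD) * d * E2 ^ n" using h2 g' by (simp add: algebra_simps)
    also have "\<dots> = d * (E1 ^ n * E2 - E1 * E2 ^ n)" using h1 by (simp add: algebra_simps)
    finally show ?thesis .
  qed
  have C: "d * Sg E1 E2 n = G * E1 ^ n - G' * E2 ^ n"
    using A B c1 by (metis mult_left_cancel)
  have "d * (Sg E1 E2 n - b * E1 ^ n - b' * E2 ^ n) = d * Sg E1 E2 n - (d * b) * E1 ^ n + ((- d) * b') * E2 ^ n"
    by (simp add: algebra_simps)
  also have "\<dots> = (G * E1 ^ n - G' * E2 ^ n) - (G - 1) * E1 ^ n + (G' - 1) * E2 ^ n"
    using C h5 h6 by simp
  also have "\<dots> = E1 ^ n - E2 ^ n" by (simp add: algebra_simps)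
  finally show ?thesis .
qed


definition qm :: "nat \<Rightarrow> ser" where "qm N = (\<lambda>m. if m = (N,0,0,0,0) then 1 else 0)"

lemma phi_qm: "phi (qm N) = fps_X ^ N"
  by (intro fps_ext) (auto simp: phi_nth qm_def fps_X_power_nth)
lemma qm_mult: "smult (qm a) (qm b) = qm (a + b)"
  by (rule phiI) (simp add: phi_mult phi_qm power_add)
lemma Low_qm: "Low (qm N) N 0" by (rule Low_I) (auto simp: qm_def split: if_splits)

lemma LF_qm: assumes "\<And>N. finite {i. P i \<and> f i \<le> N}"
  shows "LF (\<lambda>i. if P i then smult (qm (f i)) (X i) else 0)"
  apply (rule LF_by[where I="{i. P i}" and q=f and d="\<lambda>_. 0"])
  subgoal by simp
  subgoal for i using Low_smult[OF Low_qm Low_triv, of "f i" "X i"] by simp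
  subgoal for N using assms[of N] by simp
  done

definition QF :: "(nat \<Rightarrow> nat \<Rightarrow> ser) \<Rightarrow> nat \<times> nat \<Rightarrow> ser" where
  "QF X = (\<lambda>(w,n). if 0 < w \<and> 0 < n then smult (qm (w*n)) (X w n) else 0)"

lemma wn_le: assumes "0 < (w::nat)" "0 < n" "w * n \<le> N" shows "w \<le> N" "n \<le> N"
proof -
  have "w \<le> w * n" "n \<le> w * n" using assms(1,2) by simp_all
  thus "w \<le> N" "n \<le> N" using assms(3) by linarith+
qed

lemma fin_wn: "finite {(w::nat,n::nat). (0 < w \<and> 0 < n) \<and> w * n \<le> N}"
  by (rule finite_subset[of _ "{..N} \<times> {..N}"]) (auto dest: wn_le)

lemma LF_QF: "LF (QF X)"
proof -
  have eq: "QF X = (\<lambda>i. if (case i of (w,n) \<Rightarrow> 0 < w \<and> 0 < n) then smult (qm (case i of (w,n) \<Rightarrow> w*n)) (case i of (w,n) \<Rightarrow> X w n) else 0)"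
    by (auto simp: QF_def)
  show ?thesis unfolding eq
    by (rule LF_qm) (use fin_wn in \<open>simp add: case_prod_unfold\<close>)
qed

lemma PF_QF: "PF (QF X)" by (rule LF_PF[OF LF_QF])

lemma QF_smult: "smult Y (fsum (QF X)) = fsum (QF (\<lambda>w n. smult Y (X w n)))"
  by (subst fsum_smult[OF LF_QF]) (rule fsum_cong, auto simp: QF_def smult_lcomm)
lemma QF_add: "fsum (QF X) + fsum (QF Y) = fsum (QF (\<lambda>w n. X w n + Y w n))"
  by (subst fsum_add[symmetric, OF PF_QF PF_QF]) (rule fsum_cong, auto simp: QF_def smult_add)
lemma QF_diff: "fsum (QF X) - fsum (QF Y) = fsum (QF (\<lambda>w n. X w n - Y w n))"
  by (subst fsum_diff[symmetric, OF PF_QF PF_QF]) (rule fsum_cong, auto simp: QF_def smult_diff)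
lemma QF_cong: "(\<And>w n. 0 < w \<Longrightarrow> 0 < n \<Longrightarrow> X w n = Y w n) \<Longrightarrow> fsum (QF X) = fsum (QF Y)"
  by (rule fsum_cong) (auto simp: QF_def)

definition Sser :: "ser \<Rightarrow> ser \<Rightarrow> nat \<Rightarrow> ser" where
  "Sser A B n = (\<Sum>i\<in>{1..<n}. smult (ex A i) (ex B (n - i)))"

definition beta :: "ser \<Rightarrow> ser" where "beta D = sub D (fps_shift 1 bern)"

lemma sexp_at0: assumes "NC Z" shows "sexp Z (0,0,0,0,0) = 1"
proof -
  have "sexp Z (0,0,0,0,0) = (\<Sum>k\<in>{0}. sscale (fps_exp 1 $ k) (spow Z k) (0,0,0,0,0))"
    unfolding sexp_def sub_def
  proof (rule fsum_superset)
    fix k :: nat assume "k \<notin> {0}"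
    hence "k \<noteq> 0" by simp
    have "Low (spow Z k) (k*0) (k*1)" using assms unfolding NC_def by (rule Low_spow)
    hence "spow Z k (0,0,0,0,0) = 0" using Low_D \<open>k \<noteq> 0\<close> by fastforce
    thus "sscale (fps_exp 1 $ k) (spow Z k) (0,0,0,0,0) = 0" by (simp add: sscale_def)
  qed auto
  thus ?thesis by (simp add: sscale_def sone_def)
qed

lemma ex1: "ex A 1 = sexp A" by (simp add: ex_def)
lemma ex1': "ex A (Suc 0) = sexp A" by (simp add: ex_def)

lemma phi_ex_pow: assumes "NC A" shows "phi (ex A n) = phi (ex A 1) ^ n"
proof -
  have "phi (ex A n) = phi (spow (ex A 1) n)" using ex_pow[OF assms, of n] by (rule arg_cong)
  thus ?thesis by (simp only: phi_spow)
qed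

lemma phi_ex_pow': assumes "NC A" shows "phi (ex A (Suc 0)) ^ n = phi (ex A n)" "phi (ex A 1) ^ n = phi (ex A n)"
  using phi_ex_pow[OF assms, of n] by simp_all

lemma phi_Sser: assumes "NC A" "NC B"
  shows "phi (Sser A B n) = Sg (phi (ex A 1)) (phi (ex B 1)) n"
  unfolding Sser_def Sg_def
  by (simp add: phi_sum phi_mult phi_ex_pow'[OF assms(1)] phi_ex_pow'[OF assms(2)])

lemma diag_ser: assumes "NC A" "NC B" "A \<noteq> B" "1 \<le> n"
  shows "smult (A - B) (Sser A B n - smult (beta (A - B)) (ex A n) - smult (beta (- (A - B))) (ex B n))
       = ex A n - ex B n"
proof -
  define D where "D = A - B"
  have nD: "NC D" "NC (- D)" unfolding D_def using assms by (auto intro: NC_diff NC_uminus)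
  have AD: "A = B + D" unfolding D_def by simp
  have d0: "phi D \<noteq> 0"
  proof
    assume "phi D = 0"
    hence "D = 0" using phi_zero phi_inj by metis
    thus False using assms(3) unfolding D_def by simp
  qed
  have E20: "phi (ex B 1) \<noteq> 0"
  proof
    assume "phi (ex B 1) = 0"
    hence "ex B 1 = 0" using phi_zero phi_inj by metis
    thus False using sexp_at0[OF assms(2)] by (simp add: ex1 ex1')
  qed
  have eD1: "phi (sexp D) \<noteq> 1"
  proof
    assume "phi (sexp D) = 1"
    hence "sexp D = sone" using phi_sone phi_inj by metis
    hence "D = 0" using G_eq[OF nD(1)] by simp
    thus False using d0 phi_zero by simp
  qed
  have h1: "phi (ex A 1) = phi (ex B 1) * phi (sexp D)"
    unfolding ex1 AD by (simp add: sexp_add[OF assms(2) nD(1)] phi_mult)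
  have h2: "phi (sub D bern) * (phi (sexp D) - 1) = phi D"
    using arg_cong[OF G_eq[OF nD(1)], of phi] by (simp add: phi_simps)
  have h3: "phi (sub (- D) bern) * (phi (sexp (- D)) - 1) = - phi D"
    using arg_cong[OF G_eq[OF nD(2)], of phi] by (simp add: phi_simps)
  have h4: "phi (sexp (- D)) * phi (sexp D) = 1"
    using arg_cong[OF sexp_neg[OF nD(1)], of phi] by (simp add: phi_simps mult.commute)
  have h5: "phi D * phi (beta D) = phi (sub D bern) - 1"
    using arg_cong[OF beta_eq[OF nD(1)], of phi] by (simp add: phi_simps beta_def)
  have h6: "(- phi D) * phi (beta (- D)) = phi (sub (- D) bern) - 1"
    using arg_cong[OF beta_eq[OF nD(2)], of phi] by (simp add: phi_simps beta_def)
  have "phi D * (Sg (phi (ex A 1)) (phi (ex B 1)) n - phi (beta D) * phi (ex A 1) ^ n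
          - phi (beta (- D)) * phi (ex B 1) ^ n) = phi (ex A 1) ^ n - phi (ex B 1) ^ n"
    by (rule key_alg[OF h1 h2 h3 h4 h5 h6 d0 E20 eD1 assms(4)])
  hence "phi (smult D (Sser A B n - smult (beta D) (ex A n) - smult (beta (- D)) (ex B n)))
       = phi (ex A n - ex B n)"
    by (simp add: phi_mult phi_diff phi_Sser[OF assms(1,2)] phi_ex_pow'[OF assms(1)] phi_ex_pow'[OF assms(2)])
  thus ?thesis unfolding D_def by (rule phiI)
qed


lemma smult_sum: "smult X (\<Sum>i\<in>A. F i) = (\<Sum>i\<in>A. smult X (F i))"
  by (rule phiI) (simp add: phi_simps sum_distrib_left)

lemma sdiv_unique: assumes "smult D h = f" "D \<noteq> 0" shows "sdiv f D = h"
proof -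
  have "smult D (sdiv f D) = f" unfolding sdiv_def using someI[of "\<lambda>h. smult D h = f" h] assms(1) by blast
  hence "phi (smult D (sdiv f D)) = phi (smult D h)" using assms(1) by simp
  hence "phi D * phi (sdiv f D) = phi D * phi h" by (simp only: phi_mult)
  moreover have "phi D \<noteq> 0" using assms(2) phi_zero phi_inj by metis
  ultimately show ?thesis using phi_inj by simp
qed

definition Diag :: "ser \<Rightarrow> ser \<Rightarrow> ser \<Rightarrow> ser" where
  "Diag C A B = fsum (\<lambda>(w,i,j). if 0 < w \<and> 0 < i \<and> 0 < j
      then smult (qm (w * (i + j))) (smult (ex C w) (smult (ex A i) (ex B j))) else 0)"

lemma fin3: "finite {(w::nat,i::nat,j::nat). (0 < w \<and> 0 < i \<and> 0 < j) \<and> w * (i + j) \<le> N}"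
proof (rule finite_subset[of _ "{..N} \<times> {..N} \<times> {..N}"])
  show "{(w::nat,i::nat,j::nat). (0 < w \<and> 0 < i \<and> 0 < j) \<and> w * (i + j) \<le> N} \<subseteq> {..N} \<times> {..N} \<times> {..N}"
  proof (rule subsetI)
    fix x assume "x \<in> {(w::nat,i::nat,j::nat). (0 < w \<and> 0 < i \<and> 0 < j) \<and> w * (i + j) \<le> N}"
    then obtain w i j where x: "x = (w,i,j)" "0 < w" "0 < i" "0 < j" "w * (i + j) \<le> N" by auto
    have "w \<le> N" "i + j \<le> N" using wn_le[OF x(2) _ x(5)] x(3) by auto
    thus "x \<in> {..N} \<times> {..N} \<times> {..N}" using x(1) by auto
  qed
qed auto

lemma Diag_QF: "Diag C A B = fsum (QF (\<lambda>w n. smult (ex C w) (Sser A B n)))"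
proof -
  let ?K = "\<lambda>w i j. if 0 < w \<and> 0 < i \<and> 0 < j
      then smult (qm (w * (i + j))) (smult (ex C w) (smult (ex A i) (ex B j))) else 0"
  have "Diag C A B = fsum (\<lambda>w. fsum (\<lambda>(i,j). ?K w i j))"
    unfolding Diag_def
  proof (subst fsum_fsum)
    have "LF (\<lambda>x. if (case x of (w,i,j) \<Rightarrow> 0 < w \<and> 0 < i \<and> 0 < j)
        then smult (qm (case x of (w,i,j) \<Rightarrow> w * (i + j))) (case x of (w,i,j) \<Rightarrow> smult (ex C w) (smult (ex A i) (ex B j))) else 0)"
      by (rule LF_qm) (use fin3 in \<open>simp add: case_prod_unfold\<close>)
    hence "PF (\<lambda>(w,i,j). ?K w i j)" by (rule LF_PF[OF LF_mono]) (auto split: prod.splits if_splits)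
    thus "PF (\<lambda>(w, ij). (case ij of (i,j) \<Rightarrow> ?K w i j))" by (simp add: case_prod_unfold)
  qed (simp add: case_prod_unfold)
  also have "\<dots> = fsum (\<lambda>w. fsum (\<lambda>n. \<Sum>i\<le>n. ?K w i (n - i)))"
  proof (rule fsum_cong, rule fsum_regroup)
    fix w
    have fin: "finite {(i::nat,j::nat). (0 < w \<and> 0 < i \<and> 0 < j) \<and> w * (i + j) \<le> N}" for N
      by (rule finite_subset[of _ "snd ` {(w::nat,i::nat,j::nat). (0 < w \<and> 0 < i \<and> 0 < j) \<and> w * (i + j) \<le> N}"])
         (use fin3 in \<open>auto simp: image_iff\<close>)
    have "LF (\<lambda>x. if (case x of (i,j) \<Rightarrow> 0 < w \<and> 0 < i \<and> 0 < j)
        then smult (qm (case x of (i,j) \<Rightarrow> w * (i + j))) (case x of (i,j) \<Rightarrow> smult (ex C w) (smult (ex A i) (ex B j))) else 0)"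
      by (rule LF_qm) (use fin in \<open>simp add: case_prod_unfold\<close>)
    thus "PF (\<lambda>(i,j). ?K w i j)" by (rule LF_PF[OF LF_mono]) (auto split: prod.splits if_splits)
  qed
  also have "\<dots> = fsum (\<lambda>w. fsum (\<lambda>n. QF (\<lambda>w n. smult (ex C w) (Sser A B n)) (w,n)))"
  proof (rule fsum_cong, rule fsum_cong)
    fix w n :: nat
    show "(\<Sum>i\<le>n. ?K w i (n - i)) = QF (\<lambda>w n. smult (ex C w) (Sser A B n)) (w,n)"
    proof (cases "0 < w \<and> 0 < n")
      case True
      have "(\<Sum>i\<le>n. ?K w i (n - i)) = (\<Sum>i\<in>{i\<in>{..n}. 0 < i \<and> 0 < n - i}.
          smult (qm (w * n)) (smult (ex C w) (smult (ex A i) (ex B (n - i)))))"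
        by (subst sum.inter_filter[symmetric]) (auto intro!: sum.cong simp: True)
      also have "{i\<in>{..n}. 0 < i \<and> 0 < n - i} = {1..<n}" by auto
      also have "(\<Sum>i\<in>{1..<n}. smult (qm (w * n)) (smult (ex C w) (smult (ex A i) (ex B (n - i)))))
          = smult (qm (w * n)) (smult (ex C w) (Sser A B n))"
        by (simp add: Sser_def smult_sum)
      finally show ?thesis using True by (simp add: QF_def)
    next
      case False
      hence "\<forall>i\<le>n. ?K w i (n - i) = 0" by auto
      thus ?thesis using False by (auto simp: QF_def)
    qed
  qed
  also have "\<dots> = fsum (QF (\<lambda>w n. smult (ex C w) (Sser A B n)))"
    by (subst fsum_fsum) (use PF_QF in \<open>simp_all add: case_prod_unfold\<close>)
  finally show ?thesis .
qed

lemma diag_main: assumes "NC A" "NC B" "A \<noteq> B"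
  shows "Diag C A B =
     sdiv (fsum (QF (\<lambda>w n. smult (ex C w) (ex A n))) - fsum (QF (\<lambda>w n. smult (ex C w) (ex B n)))) (A - B)
     + fsum (\<lambda>k::nat. if k = 0 then 0 else
                sscale (bernoulli k / fact k)
                  (smult (spow (A - B) (k - 1))
                     (fsum (QF (\<lambda>w n. smult (ex C w) (ex A n))) + sscale ((-1) ^ (k - 1)) (fsum (QF (\<lambda>w n. smult (ex C w) (ex B n)))))))"
proof -
  define D where "D = A - B"
  have nD: "NC D" unfolding D_def using assms by (auto intro: NC_diff)
  define TA where "TA = fsum (QF (\<lambda>w n. smult (ex C w) (ex A n)))"
  define TB where "TB = fsum (QF (\<lambda>w n. smult (ex C w) (ex B n)))"
  define H where "H = fsum (QF (\<lambda>w n. smult (ex C w)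
      (Sser A B n - smult (beta D) (ex A n) - smult (beta (- D)) (ex B n))))"
  have "smult D H = fsum (QF (\<lambda>w n. smult D (smult (ex C w)
      (Sser A B n - smult (beta D) (ex A n) - smult (beta (- D)) (ex B n)))))"
    unfolding H_def by (rule QF_smult)
  also have "\<dots> = fsum (QF (\<lambda>w n. smult (ex C w) (ex A n) - smult (ex C w) (ex B n)))"
  proof (rule QF_cong)
    fix w n :: nat assume "0 < w" "0 < n"
    have eq: "smult D (Sser A B n - smult (beta D) (ex A n) - smult (beta (- D)) (ex B n)) = ex A n - ex B n"
      unfolding D_def by (rule diag_ser[OF assms]) (use \<open>0 < n\<close> in simp)
    thus "smult D (smult (ex C w) (Sser A B n - smult (beta D) (ex A n) - smult (beta (- D)) (ex B n)))
        = smult (ex C w) (ex A n) - smult (ex C w) (ex B n)"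
      by (subst smult_lcomm) (simp only: eq smult_diff)
  qed
  also have "\<dots> = TA - TB" unfolding TA_def TB_def by (rule QF_diff[symmetric])
  finally have sd: "sdiv (TA - TB) D = H"
    by (intro sdiv_unique) (use assms(3) in \<open>auto simp: D_def\<close>)
  have bs: "fsum (\<lambda>k::nat. if k = 0 then 0 else
                sscale (bernoulli k / fact k)
                  (smult (spow D (k - 1)) (TA + sscale ((-1) ^ (k - 1)) TB)))
        = smult (beta D) TA + smult (beta (- D)) TB"
    using bern_sum[OF nD] by (simp add: beta_def)
  have "H + (smult (beta D) TA + smult (beta (- D)) TB) = fsum (QF (\<lambda>w n. smult (ex C w) (Sser A B n)))"
    unfolding H_def TA_def TB_def QF_smult QF_add
    by (rule QF_cong) (simp add: smult_diff smult_lcomm[of "beta D"] smult_lcomm[of "beta (- D)"])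
  hence "fsum (QF (\<lambda>w n. smult (ex C w) (Sser A B n))) = sdiv (TA - TB) D + fsum (\<lambda>k::nat. if k = 0 then 0 else
                sscale (bernoulli k / fact k)
                  (smult (spow D (k - 1)) (TA + sscale ((-1) ^ (k - 1)) TB)))"
    by (simp only: sd bs)
  thus ?thesis unfolding Diag_QF TA_def TB_def D_def .
qed


lemma qser_fsum:
  assumes fin: "\<And>N. finite {u. P u \<and> g u = N}"
  shows "qser (\<lambda>N. \<Sum>u\<in>{u. P u \<and> g u = N}. w u) = fsum (\<lambda>u. if P u then sscale (w u) (qm (g u)) else 0)"
proof
  fix m :: mono
  obtain n a b c d where m: "m = (n,a,b,c,d)" by (cases m) auto
  have "fsum (\<lambda>u. if P u then sscale (w u) (qm (g u)) else 0) m
      = (\<Sum>u\<in>{u. P u \<and> g u = n}. (if P u then sscale (w u) (qm (g u)) else 0) m)"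
    by (rule fsum_superset[OF fin]) (auto simp: m sscale_def qm_def)
  also have "\<dots> = (\<Sum>u\<in>{u. P u \<and> g u = n}. if a = 0 \<and> b = 0 \<and> c = 0 \<and> d = 0 then w u else 0)"
    by (rule sum.cong) (auto simp: m sscale_def qm_def)
  also have "\<dots> = qser (\<lambda>N. \<Sum>u\<in>{u. P u \<and> g u = N}. w u) m"
    by (simp add: m qser_def)
  finally show "qser (\<lambda>N. \<Sum>u\<in>{u. P u \<and> g u = N}. w u) m = fsum (\<lambda>u. if P u then sscale (w u) (qm (g u)) else 0) m" ..
qed

lemma LF_prod: assumes "LF F" "LF G" shows "LF (\<lambda>(i,j). smult (F i) (G j))"
proof (rule LF_I)
  fix m
  show "finite {ij. \<exists>p. mle p m \<and> (case ij of (i,j) \<Rightarrow> smult (F i) (G j)) p \<noteq> 0}"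
  proof (rule finite_subset[of _ "{i. \<exists>p. mle p m \<and> F i p \<noteq> 0} \<times> {j. \<exists>p. mle p m \<and> G j p \<noteq> 0}"])
    show "finite ({i. \<exists>p. mle p m \<and> F i p \<noteq> 0} \<times> {j. \<exists>p. mle p m \<and> G j p \<noteq> 0})"
      using LF_D[OF assms(1)] LF_D[OF assms(2)] by blast
    show "{ij. \<exists>p. mle p m \<and> (case ij of (i,j) \<Rightarrow> smult (F i) (G j)) p \<noteq> 0}
       \<subseteq> {i. \<exists>p. mle p m \<and> F i p \<noteq> 0} \<times> {j. \<exists>p. mle p m \<and> G j p \<noteq> 0}"
    proof (rule subsetI)
      fix ij assume "ij \<in> {ij. \<exists>p. mle p m \<and> (case ij of (i,j) \<Rightarrow> smult (F i) (G j)) p \<noteq> 0}"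
      then obtain i j p where ij: "ij = (i,j)" "mle p m" "smult (F i) (G j) p \<noteq> 0" by (cases ij) auto
      then obtain p' where "mle p' p" "F i p' \<noteq> 0" "G j (msub p p') \<noteq> 0" using smult_nz by blast
      thus "ij \<in> {i. \<exists>p. mle p m \<and> F i p \<noteq> 0} \<times> {j. \<exists>p. mle p m \<and> G j p \<noteq> 0}"
        using ij mle_trans mle_msub by blast
    qed
  qed
qed

lemma expand:
  fixes P :: "'u \<Rightarrow> bool" and g :: "'u \<Rightarrow> nat" and w :: "'u \<Rightarrow> 'e \<Rightarrow> rat" and M :: "'e \<Rightarrow> ser" and dg :: "'e \<Rightarrow> nat"
  assumes fu: "\<And>N. finite {u. P u \<and> g u \<le> N}"
    and lowM: "\<And>e. Low (M e) 0 (dg e)" and fe: "\<And>N. finite {e. dg e \<le> N}"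
    and exu: "\<And>u. P u \<Longrightarrow> fsum (\<lambda>e. sscale (w u e) (M e)) = Eu u"
  shows "fsum (\<lambda>e. smult (qser (\<lambda>N. \<Sum>u\<in>{u. P u \<and> g u = N}. w u e)) (M e))
       = fsum (\<lambda>u. if P u then smult (qm (g u)) (Eu u) else 0)"
proof -
  have ffib: "finite {u. P u \<and> g u = N}" for N by (rule finite_subset[OF _ fu[of N]]) auto
  let ?J = "\<lambda>e u. if P u then sscale (w u e) (smult (qm (g u)) (M e)) else 0"
  have LFu: "LF (\<lambda>u. if P u then sscale (w u e) (qm (g u)) else 0)" for e
  proof (rule LF_by[where I="{u. P u}" and q=g and d="\<lambda>_. 0"])
    fix u assume "u \<in> {u. P u}"
    thus "Low (if P u then sscale (w u e) (qm (g u)) else 0) (g u) 0" by (simp add: Low_sscale Low_qm)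
  qed (use fu in auto)
  have lowJ: "Low (smult (qm (g u)) (M e)) (g u + 0) (0 + dg e)" for u e
    by (rule Low_smult[OF Low_qm lowM])
  have LFeu: "LF (\<lambda>(e,u). ?J e u)"
  proof (rule LF_by[where I="{(e,u). P u}" and q="\<lambda>(e,u). g u" and d="\<lambda>(e,u). dg e"])
    fix eu :: "'e \<times> 'u" assume "eu \<in> {(e,u). P u}"
    then obtain e u where eu: "eu = (e,u)" "P u" by auto
    show "Low ((\<lambda>(e,u). ?J e u) eu) ((\<lambda>(e,u). g u) eu) ((\<lambda>(e,u). dg e) eu)"
      using lowJ[of u e] eu by (simp add: Low_sscale)
  next
    fix N show "finite {eu \<in> {(e,u). P u}. (\<lambda>(e,u). g u) eu + (\<lambda>(e,u). dg e) eu \<le> N}"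
      by (rule finite_subset[of _ "{e. dg e \<le> N} \<times> {u. P u \<and> g u \<le> N}"]) (use fe fu in auto)
  qed auto
  have LFue: "LF (\<lambda>(u,e). ?J e u)"
  proof (rule LF_by[where I="{(u,e). P u}" and q="\<lambda>(u,e). g u" and d="\<lambda>(u,e). dg e"])
    fix ue :: "'u \<times> 'e" assume "ue \<in> {(u,e). P u}"
    then obtain e u where ue: "ue = (u,e)" "P u" by auto
    show "Low ((\<lambda>(u,e). ?J e u) ue) ((\<lambda>(u,e). g u) ue) ((\<lambda>(u,e). dg e) ue)"
      using lowJ[of u e] ue by (simp add: Low_sscale)
  next
    fix N show "finite {ue \<in> {(u,e). P u}. (\<lambda>(u,e). g u) ue + (\<lambda>(u,e). dg e) ue \<le> N}"
      by (rule finite_subset[of _ "{u. P u \<and> g u \<le> N} \<times> {e. dg e \<le> N}"]) (use fe fu in auto)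
  qed auto
  have LFe: "LF (\<lambda>e. sscale (w u e) (M e))" for u
  proof (rule LF_by[where I=UNIV and q="\<lambda>_. 0" and d=dg])
    fix e show "Low (sscale (w u e) (M e)) 0 (dg e)" by (rule Low_sscale[OF lowM])
  qed (use fe in auto)
  have "fsum (\<lambda>e. smult (qser (\<lambda>N. \<Sum>u\<in>{u. P u \<and> g u = N}. w u e)) (M e))
      = fsum (\<lambda>e. fsum (\<lambda>u. ?J e u))"
  proof (rule fsum_cong)
    fix e
    show "smult (qser (\<lambda>N. \<Sum>u\<in>{u. P u \<and> g u = N}. w u e)) (M e) = fsum (\<lambda>u. ?J e u)"
      unfolding qser_fsum[OF ffib] fsum_smult_right[OF LFu]
      by (rule fsum_cong) (simp add: smult_sscale)
  qed
  also have "\<dots> = fsum (\<lambda>(e,u). ?J e u)" by (rule fsum_fsum[OF LF_PF[OF LFeu]])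
  also have "\<dots> = fsum (\<lambda>(u,e). ?J e u)"
    by (rule fsum_reindex[where A=UNIV and B=UNIV and h=prod.swap and k=prod.swap]) auto
  also have "\<dots> = fsum (\<lambda>u. fsum (\<lambda>e. ?J e u))" by (rule fsum_fsum[OF LF_PF[OF LFue], symmetric])
  also have "\<dots> = fsum (\<lambda>u. if P u then smult (qm (g u)) (Eu u) else 0)"
  proof (rule fsum_cong)
    fix u show "fsum (\<lambda>e. ?J e u) = (if P u then smult (qm (g u)) (Eu u) else 0)"
    proof (cases "P u")
      case True
      have "fsum (\<lambda>e. ?J e u) = fsum (\<lambda>e. smult (qm (g u)) (sscale (w u e) (M e)))"
        by (rule fsum_cong) (simp add: True smult_sscale)
      also have "\<dots> = smult (qm (g u)) (Eu u)"
        by (subst fsum_smult[OF LFe, symmetric]) (simp add: exu True)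
      finally show ?thesis using True by simp
    qed simp
  qed
  finally show ?thesis .
qed


lemma sprodl_simps[simp]: "sprodl [] = sone" "sprodl (x # xs) = smult x (sprodl xs)"
  by (simp_all add: sprodl_def)

definition P1 :: "nat \<times> nat \<Rightarrow> bool" where "P1 = (\<lambda>(u,v). 0 < u \<and> 0 < v)"
definition g1 :: "nat \<times> nat \<Rightarrow> nat" where "g1 = (\<lambda>(u,v). u * v)"
definition w1 :: "nat \<times> nat \<Rightarrow> nat \<times> nat \<Rightarrow> rat" where
  "w1 = (\<lambda>(u,v) (e,f). (of_nat u ^ f / fact f) * (of_nat v ^ e / fact e))"

lemma bib1: "bibracket [Suc e] [f] = (\<lambda>N. \<Sum>x\<in>{x. P1 x \<and> g1 x = N}. w1 x (e,f))"
proof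
  fix N
  show "bibracket [Suc e] [f] N = (\<Sum>x\<in>{x. P1 x \<and> g1 x = N}. w1 x (e,f))"
    unfolding bibracket_def
  proof (rule sum.reindex_bij_witness[where i="\<lambda>(u,v). ([u],[v])" and j="\<lambda>(us,vs). (hd us, hd vs)"])
    fix a assume a: "a \<in> {(u, v). length u = length [Suc e] \<and> length v = length [Suc e] \<and>
                     sorted_wrt (>) u \<and> (\<forall>x\<in>set u. 0 < x) \<and> (\<forall>x\<in>set v. 0 < x) \<and>
                     (\<Sum>j<length [Suc e]. u ! j * v ! j) = N}"
    then obtain u v where uv: "a = ([u],[v])" "0 < u" "0 < v" "u * v = N"
      by (auto simp: length_Suc_conv)
    show "(case (case a of (us, vs) \<Rightarrow> (hd us, hd vs)) of (u, v) \<Rightarrow> ([u], [v])) = a" using uv by simp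
    show "(case a of (us, vs) \<Rightarrow> (hd us, hd vs)) \<in> {x. P1 x \<and> g1 x = N}" using uv by (simp add: P1_def g1_def)
    show "w1 (case a of (us, vs) \<Rightarrow> (hd us, hd vs)) (e, f) =
       (case a of (u, v) \<Rightarrow> \<Prod>j<length [Suc e]. of_nat (u ! j) ^ ([f] ! j) / fact ([f] ! j) *
          (of_nat (v ! j) ^ ([Suc e] ! j - 1) / fact ([Suc e] ! j - 1)))"
      using uv by (simp add: w1_def)
  next
    fix b assume "b \<in> {x. P1 x \<and> g1 x = N}"
    then obtain u v where uv: "b = (u,v)" "0 < u" "0 < v" "u * v = N" by (auto simp: P1_def g1_def)
    show "(case (case b of (u, v) \<Rightarrow> ([u], [v])) of (us, vs) \<Rightarrow> (hd us, hd vs)) = b" using uv by simp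
    show "(case b of (u, v) \<Rightarrow> ([u], [v])) \<in> {(u, v). length u = length [Suc e] \<and> length v = length [Suc e] \<and>
                     sorted_wrt (>) u \<and> (\<forall>x\<in>set u. 0 < x) \<and> (\<forall>x\<in>set v. 0 < x) \<and>
                     (\<Sum>j<length [Suc e]. u ! j * v ! j) = N}" using uv by simp
  qed
qed

lemma Tgen1_reidx: "Tgen [Z] [W] = fsum (\<lambda>(e,f). smult (qser (bibracket [Suc e] [f])) (smult (spow Z e) (spow W f)))"
  unfolding Tgen_def
  by (rule fsum_reindex[where A="{(es,fs). length es = 1 \<and> length fs = 1}" and B=UNIV
        and h="\<lambda>(es,fs). (hd es, hd fs)" and k="\<lambda>(e,f). ([e],[f])"])
     (auto simp: length_Suc_conv)

lemma fin_ef: "finite {(e::nat,f::nat). e + f \<le> N}"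
  by (rule finite_subset[of _ "{..N} \<times> {..N}"]) auto

lemma Tgen1: assumes "NC Z" "NC W" shows "Tgen [Z] [W] = fsum (QF (\<lambda>u v. smult (ex Z v) (ex W u)))"
proof -
  let ?M = "\<lambda>(e,f). smult (spow Z e) (spow W f)"
  let ?Eu = "\<lambda>(u,v). smult (ex Z v) (ex W u)"
  have "Tgen [Z] [W] = fsum (\<lambda>ef. smult (qser (\<lambda>N. \<Sum>x\<in>{x. P1 x \<and> g1 x = N}. w1 x ef)) (?M ef))"
    unfolding Tgen1_reidx bib1 by (rule fsum_cong) (auto simp: bib1)
  also have "\<dots> = fsum (\<lambda>x. if P1 x then smult (qm (g1 x)) (?Eu x) else 0)"
  proof (rule expand[where dg="\<lambda>(e,f). e + f"])
    fix N :: nat show "finite {x. P1 x \<and> g1 x \<le> N}"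
      using fin_wn[of N] by (simp add: P1_def g1_def case_prod_unfold)
  next
    fix ef :: "nat \<times> nat"
    obtain e f where ef: "ef = (e,f)" by (cases ef)
    have "Low (smult (spow Z e) (spow W f)) (e*0 + f*0) (e*1 + f*1)"
      by (rule Low_smult; rule Low_spow) (use assms in \<open>simp_all add: NC_def\<close>)
    thus "Low (?M ef) 0 ((\<lambda>(e,f). e + f) ef)" by (simp add: ef)
  next
    fix N :: nat show "finite {ef. (\<lambda>(e,f). e + f) ef \<le> N}" using fin_ef[of N] by (simp add: case_prod_unfold)
  next
    fix x assume "P1 x"
    then obtain u v where x: "x = (u,v)" by (cases x)
    have "?Eu x = smult (ex Z v) (ex W u)" by (simp add: x)
    also have "\<dots> = fsum (\<lambda>(e,f). smult (sscale (of_nat v ^ e / fact e) (spow Z e)) (sscale (of_nat u ^ f / fact f) (spow W f)))"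
      unfolding ex_expand by (rule fsum_prod) (intro LF_pow assms)+
    also have "\<dots> = fsum (\<lambda>ef. sscale (w1 x ef) (?M ef))"
      by (rule fsum_cong) (auto simp: x w1_def smult_sscale sscale_sscale mult.commute)
    finally show "fsum (\<lambda>ef. sscale (w1 x ef) (?M ef)) = ?Eu x" ..
  qed
  also have "\<dots> = fsum (QF (\<lambda>u v. smult (ex Z v) (ex W u)))"
    by (rule fsum_cong) (auto simp: QF_def P1_def g1_def)
  finally show ?thesis .
qed


definition P2 :: "nat \<times> nat \<times> nat \<times> nat \<Rightarrow> bool" where
  "P2 = (\<lambda>(u1,u2,v1,v2). u2 < u1 \<and> 0 < u2 \<and> 0 < v1 \<and> 0 < v2)"
definition g2 :: "nat \<times> nat \<times> nat \<times> nat \<Rightarrow> nat" where "g2 = (\<lambda>(u1,u2,v1,v2). u1 * v1 + u2 * v2)"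
definition w2 :: "nat \<times> nat \<times> nat \<times> nat \<Rightarrow> (nat \<times> nat) \<times> (nat \<times> nat) \<Rightarrow> rat" where
  "w2 = (\<lambda>(u1,u2,v1,v2) ((e1,e2),(f1,f2)). ((of_nat u1 ^ f1 / fact f1) * (of_nat v1 ^ e1 / fact e1)) *
      ((of_nat u2 ^ f2 / fact f2) * (of_nat v2 ^ e2 / fact e2)))"

lemma len2: "length xs = 2 \<longleftrightarrow> (\<exists>a b. xs = [a, b])"
  by (auto simp: numeral_2_eq_2 length_Suc_conv)

lemma bib2: "bibracket [Suc e1, Suc e2] [f1, f2] = (\<lambda>N. \<Sum>x\<in>{x. P2 x \<and> g2 x = N}. w2 x ((e1,e2),(f1,f2)))"
proof
  fix N
  show "bibracket [Suc e1, Suc e2] [f1, f2] N = (\<Sum>x\<in>{x. P2 x \<and> g2 x = N}. w2 x ((e1,e2),(f1,f2)))"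
    unfolding bibracket_def
  proof (rule sum.reindex_bij_witness[where i="\<lambda>(u1,u2,v1,v2). ([u1,u2],[v1,v2])"
        and j="\<lambda>(us,vs). (us!0, us!1, vs!0, vs!1)"])
    fix a assume a: "a \<in> {(u, v). length u = length [Suc e1, Suc e2] \<and> length v = length [Suc e1, Suc e2] \<and>
                     sorted_wrt (>) u \<and> (\<forall>x\<in>set u. 0 < x) \<and> (\<forall>x\<in>set v. 0 < x) \<and>
                     (\<Sum>j<length [Suc e1, Suc e2]. u ! j * v ! j) = N}"
    then obtain us vs where a1: "a = (us,vs)" "length us = length [Suc e1, Suc e2]" "length vs = length [Suc e1, Suc e2]" "sorted_wrt (>) us"
      "\<forall>x\<in>set us. 0 < x" "\<forall>x\<in>set vs. 0 < x" "(\<Sum>j<length [Suc e1, Suc e2]. us ! j * vs ! j) = N" by blast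
    have "length us = 2" "length vs = 2" using a1(2,3) by simp_all
    then obtain u1 u2 v1 v2 where us: "us = [u1,u2]" and vs: "vs = [v1,v2]" using len2 by metis
    have uv: "a = ([u1,u2],[v1,v2])" "u2 < u1" "0 < u2" "0 < v1" "0 < v2" "u1 * v1 + u2 * v2 = N"
      using a1 unfolding us vs by (auto simp: numeral_2_eq_2)
    show "(case (case a of (us, vs) \<Rightarrow> (us!0, us!1, vs!0, vs!1)) of (u1,u2,v1,v2) \<Rightarrow> ([u1,u2],[v1,v2])) = a"
      using uv by simp
    show "(case a of (us, vs) \<Rightarrow> (us!0, us!1, vs!0, vs!1)) \<in> {x. P2 x \<and> g2 x = N}"
      using uv by (simp add: P2_def g2_def)
    show "w2 (case a of (us, vs) \<Rightarrow> (us!0, us!1, vs!0, vs!1)) ((e1,e2),(f1,f2)) =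
       (case a of (u, v) \<Rightarrow> \<Prod>j<length [Suc e1, Suc e2]. of_nat (u ! j) ^ ([f1, f2] ! j) / fact ([f1, f2] ! j) *
          (of_nat (v ! j) ^ ([Suc e1, Suc e2] ! j - 1) / fact ([Suc e1, Suc e2] ! j - 1)))"
      using uv by (simp add: w2_def numeral_2_eq_2)
  next
    fix b assume "b \<in> {x. P2 x \<and> g2 x = N}"
    then obtain u1 u2 v1 v2 where uv: "b = (u1,u2,v1,v2)" "u2 < u1" "0 < u2" "0 < v1" "0 < v2"
      "u1 * v1 + u2 * v2 = N" by (auto simp: P2_def g2_def)
    show "(case (case b of (u1,u2,v1,v2) \<Rightarrow> ([u1,u2],[v1,v2])) of (us, vs) \<Rightarrow> (us!0, us!1, vs!0, vs!1)) = b"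
      using uv by simp
    show "(case b of (u1,u2,v1,v2) \<Rightarrow> ([u1,u2],[v1,v2])) \<in> {(u, v). length u = length [Suc e1, Suc e2] \<and> length v = length [Suc e1, Suc e2] \<and>
                     sorted_wrt (>) u \<and> (\<forall>x\<in>set u. 0 < x) \<and> (\<forall>x\<in>set v. 0 < x) \<and>
                     (\<Sum>j<length [Suc e1, Suc e2]. u ! j * v ! j) = N}" using uv by (simp add: numeral_2_eq_2)
  qed
qed
lemma Tgen2_reidx: "Tgen [Z1, Z2] [W1, W2] = fsum (\<lambda>((e1,e2),(f1,f2)). smult (qser (bibracket [Suc e1, Suc e2] [f1, f2]))
     (smult (smult (spow Z1 e1) (spow Z2 e2)) (smult (spow W1 f1) (spow W2 f2))))"
  unfolding Tgen_def
  by (rule fsum_reindex[where A="{(es,fs). length es = length [Z1,Z2] \<and> length fs = length [W1,W2]}" and B=UNIV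
        and h="\<lambda>(es,fs). ((es!0, es!1), (fs!0, fs!1))" and k="\<lambda>((e1,e2),(f1,f2)). ([e1,e2],[f1,f2])"])
     (auto simp: length_Suc_conv split: if_splits)

lemma fin4: "finite {x. P2 x \<and> g2 x \<le> N}"
proof (rule finite_subset[of _ "{..N} \<times> {..N} \<times> {..N} \<times> {..N}"])
  show "{x. P2 x \<and> g2 x \<le> N} \<subseteq> {..N} \<times> {..N} \<times> {..N} \<times> {..N}"
  proof (rule subsetI)
    fix x assume "x \<in> {x. P2 x \<and> g2 x \<le> N}"
    then obtain u1 u2 v1 v2 where x: "x = (u1,u2,v1,v2)" "u2 < u1" "0 < u2" "0 < v1" "0 < v2"
      "u1 * v1 + u2 * v2 \<le> N" by (auto simp: P2_def g2_def)
    have "u1 * v1 \<le> N" "u2 * v2 \<le> N" using x(6) by auto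
    moreover have "0 < u1" using x by simp
    ultimately have "u1 \<le> N" "v1 \<le> N" "u2 \<le> N" "v2 \<le> N" using wn_le x(3-5) by blast+
    thus "x \<in> {..N} \<times> {..N} \<times> {..N} \<times> {..N}" using x(1) by simp
  qed
qed auto

lemma fin_ef2: "finite {x::(nat\<times>nat)\<times>(nat\<times>nat). (\<lambda>((e1,e2),(f1,f2)). e1 + e2 + f1 + f2) x \<le> N}"
  by (rule finite_subset[of _ "({..N} \<times> {..N}) \<times> ({..N} \<times> {..N})"]) auto

definition T2f :: "ser \<Rightarrow> ser \<Rightarrow> ser \<Rightarrow> ser \<Rightarrow> ser" where
  "T2f Z1 Z2 W1 W2 = fsum (\<lambda>(u1,u2,v1,v2). if u2 < u1 \<and> 0 < u2 \<and> 0 < v1 \<and> 0 < v2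
     then smult (qm (u1*v1 + u2*v2)) (smult (ex Z1 v1) (smult (ex Z2 v2) (smult (ex W1 u1) (ex W2 u2))))
     else 0)"

lemma Tgen2: assumes "NC Z1" "NC Z2" "NC W1" "NC W2" shows "Tgen [Z1, Z2] [W1, W2] = T2f Z1 Z2 W1 W2"
proof -
  let ?M = "\<lambda>((e1,e2),(f1,f2)). smult (smult (spow Z1 e1) (spow Z2 e2)) (smult (spow W1 f1) (spow W2 f2))"
  let ?Eu = "\<lambda>(u1,u2,v1,v2). smult (smult (ex Z1 v1) (ex Z2 v2)) (smult (ex W1 u1) (ex W2 u2))"
  have "Tgen [Z1, Z2] [W1, W2] = fsum (\<lambda>ef. smult (qser (\<lambda>N. \<Sum>x\<in>{x. P2 x \<and> g2 x = N}. w2 x ef)) (?M ef))"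
    unfolding Tgen2_reidx by (rule fsum_cong) (auto simp: bib2)
  also have "\<dots> = fsum (\<lambda>x. if P2 x then smult (qm (g2 x)) (?Eu x) else 0)"
  proof (rule expand[where dg="\<lambda>((e1,e2),(f1,f2)). e1 + e2 + f1 + f2"])
    fix N :: nat show "finite {x. P2 x \<and> g2 x \<le> N}" by (rule fin4)
  next
    fix ef :: "(nat \<times> nat) \<times> (nat \<times> nat)"
    obtain e1 e2 f1 f2 where ef: "ef = ((e1,e2),(f1,f2))" by (cases ef) auto
    have l: "Low (spow Z e) (e*0) (e*1)" if "NC Z" for Z e using that unfolding NC_def by (rule Low_spow)
    have "Low (smult (smult (spow Z1 e1) (spow Z2 e2)) (smult (spow W1 f1) (spow W2 f2)))
        ((e1*0 + e2*0) + (f1*0 + f2*0)) ((e1*1 + e2*1) + (f1*1 + f2*1))"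
      by (intro Low_smult l assms)
    thus "Low (?M ef) 0 ((\<lambda>((e1,e2),(f1,f2)). e1 + e2 + f1 + f2) ef)" by (simp add: ef add.assoc)
  next
    fix N :: nat show "finite {ef. (\<lambda>((e1,e2),(f1,f2)). e1 + e2 + f1 + f2) ef \<le> N}" by (rule fin_ef2)
  next
    fix x assume "P2 x"
    obtain u1 u2 v1 v2 where x: "x = (u1,u2,v1,v2)" by (cases x) auto
    let ?c = "\<lambda>v e. (of_nat v ^ e / fact e :: rat)"
    have "?Eu x = smult (smult (ex Z1 v1) (ex Z2 v2)) (smult (ex W1 u1) (ex W2 u2))" by (simp add: x)
    also have "\<dots> = smult (fsum (\<lambda>(e1,e2). smult (sscale (?c v1 e1) (spow Z1 e1)) (sscale (?c v2 e2) (spow Z2 e2))))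
         (fsum (\<lambda>(f1,f2). smult (sscale (?c u1 f1) (spow W1 f1)) (sscale (?c u2 f2) (spow W2 f2))))"
      unfolding ex_expand by (subst fsum_prod, (intro LF_pow assms)+)+ (rule refl)
    also have "\<dots> = fsum (\<lambda>(ee,ff). smult ((\<lambda>(e1,e2). smult (sscale (?c v1 e1) (spow Z1 e1)) (sscale (?c v2 e2) (spow Z2 e2))) ee)
          ((\<lambda>(f1,f2). smult (sscale (?c u1 f1) (spow W1 f1)) (sscale (?c u2 f2) (spow W2 f2))) ff))"
      by (rule fsum_prod) (intro LF_prod LF_pow assms)+
    also have "\<dots> = fsum (\<lambda>ef. sscale (w2 x ef) (?M ef))"
      by (rule fsum_cong) (auto simp: x w2_def smult_sscale sscale_sscale mult_ac)
    finally show "fsum (\<lambda>ef. sscale (w2 x ef) (?M ef)) = ?Eu x" ..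
  qed
  also have "\<dots> = T2f Z1 Z2 W1 W2"
    unfolding T2f_def by (rule fsum_cong) (auto simp: P2_def g2_def smult_ac)
  finally show ?thesis .
qed


lemma NC_vars: "NC sX1" "NC sX2" "NC sY1" "NC sY2"
  unfolding NC_def by (rule Low_I; auto simp: sX1_def sX2_def sY1_def sY2_def split: if_splits)+

lemma vars_ne: "sX1 \<noteq> sX2" "sY1 \<noteq> sY2"
proof -
  have "sX1 (0,1,0,0,0) \<noteq> sX2 (0,1,0,0,0)" by (simp add: sX1_def sX2_def)
  thus "sX1 \<noteq> sX2" by metis
  have "sY1 (0,0,0,1,0) \<noteq> sY2 (0,0,0,1,0)" by (simp add: sY1_def sY2_def)
  thus "sY1 \<noteq> sY2" by metis
qed

lemma QF_swap: "fsum (QF X) = fsum (QF (\<lambda>a b. X b a))"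
  by (rule fsum_reindex[where A=UNIV and B=UNIV and h=prod.swap and k=prod.swap])
     (auto simp: QF_def mult.commute)

lemma fsum_split3:
  assumes "PF F" "\<And>i. (Q1 i \<and> \<not> Q2 i \<and> \<not> Q3 i) \<or> (\<not> Q1 i \<and> Q2 i \<and> \<not> Q3 i) \<or> (\<not> Q1 i \<and> \<not> Q2 i \<and> Q3 i)"
  shows "fsum F = fsum (\<lambda>i. if Q1 i then F i else 0) + fsum (\<lambda>i. if Q2 i then F i else 0)
     + fsum (\<lambda>i. if Q3 i then F i else 0)"
proof -
  have pf: "PF (\<lambda>i. if P i then F i else 0)" for P
    by (rule PF_mono[OF assms(1)]) (auto split: if_splits)
  have "fsum F = fsum (\<lambda>i. ((if Q1 i then F i else 0) + (if Q2 i then F i else 0)) + (if Q3 i then F i else 0))"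
    by (rule fsum_cong) (use assms(2) in \<open>auto\<close>)
  also have "\<dots> = fsum (\<lambda>i. (if Q1 i then F i else 0) + (if Q2 i then F i else 0)) + fsum (\<lambda>i. if Q3 i then F i else 0)"
    by (rule fsum_add) (intro PF_add pf)+
  also have "fsum (\<lambda>i. (if Q1 i then F i else 0) + (if Q2 i then F i else 0))
     = fsum (\<lambda>i. if Q1 i then F i else 0) + fsum (\<lambda>i. if Q2 i then F i else 0)"
    by (rule fsum_add) (rule pf)+
  finally show ?thesis .
qed

definition Pf :: "(nat \<Rightarrow> nat \<Rightarrow> ser) \<Rightarrow> (nat \<Rightarrow> nat \<Rightarrow> ser) \<Rightarrow> (nat \<times> nat) \<times> (nat \<times> nat) \<Rightarrow> ser" where
  "Pf X Y = (\<lambda>((u1,v1),(u2,v2)). if 0 < u1 \<and> 0 < v1 \<and> 0 < u2 \<and> 0 < v2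
      then smult (qm (u1*v1 + u2*v2)) (smult (X u1 v1) (Y u2 v2)) else 0)"

lemma qm_rearr: "smult (smult (qm a) P) (smult (qm b) Q) = smult (qm (a + b)) (smult P Q)"
  by (rule phiI) (simp add: phi_mult phi_qm power_add ac_simps)

lemma prod_Pf: "smult (fsum (QF X)) (fsum (QF Y)) = fsum (Pf X Y)"
proof -
  have "smult (fsum (QF X)) (fsum (QF Y)) = fsum (\<lambda>(i,j). smult (QF X i) (QF Y j))"
    by (rule fsum_prod[OF LF_QF LF_QF])
  also have "\<dots> = fsum (Pf X Y)"
    by (rule fsum_cong) (auto simp: QF_def Pf_def qm_rearr)
  finally show ?thesis .
qed

lemma PF_Pf: "PF (Pf X Y)"
proof -
  have fin: "finite {i :: (nat \<times> nat) \<times> (nat \<times> nat). (case i of ((u1,v1),(u2,v2)) \<Rightarrow> 0 < u1 \<and> 0 < v1 \<and> 0 < u2 \<and> 0 < v2)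
      \<and> (case i of ((u1,v1),(u2,v2)) \<Rightarrow> u1*v1 + u2*v2) \<le> N}" for N
  proof (rule finite_subset[of _ "({..N} \<times> {..N}) \<times> ({..N} \<times> {..N})"])
    show "{i :: (nat \<times> nat) \<times> (nat \<times> nat). (case i of ((u1,v1),(u2,v2)) \<Rightarrow> 0 < u1 \<and> 0 < v1 \<and> 0 < u2 \<and> 0 < v2)
      \<and> (case i of ((u1,v1),(u2,v2)) \<Rightarrow> u1*v1 + u2*v2) \<le> N} \<subseteq> ({..N} \<times> {..N}) \<times> ({..N} \<times> {..N})"
    proof (rule subsetI)
      fix x assume "x \<in> {i :: (nat \<times> nat) \<times> (nat \<times> nat). (case i of ((u1,v1),(u2,v2)) \<Rightarrow> 0 < u1 \<and> 0 < v1 \<and> 0 < u2 \<and> 0 < v2)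
        \<and> (case i of ((u1,v1),(u2,v2)) \<Rightarrow> u1*v1 + u2*v2) \<le> N}"
      then obtain u1 v1 u2 v2 where x: "x = ((u1,v1),(u2,v2))" "0 < u1" "0 < v1" "0 < u2" "0 < v2"
        "u1*v1 + u2*v2 \<le> N" by (auto split: prod.splits)
      have "u1*v1 \<le> N" "u2*v2 \<le> N" using x(6) by auto
      hence "u1 \<le> N" "v1 \<le> N" "u2 \<le> N" "v2 \<le> N" using wn_le x(2-5) by blast+
      thus "x \<in> ({..N} \<times> {..N}) \<times> ({..N} \<times> {..N})" using x(1) by simp
    qed
  qed auto
  have "LF (\<lambda>i. if (case i of ((u1,v1),(u2,v2)) \<Rightarrow> 0 < u1 \<and> 0 < v1 \<and> 0 < u2 \<and> 0 < v2)
      then smult (qm (case i of ((u1,v1),(u2,v2)) \<Rightarrow> u1*v1 + u2*v2))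
        (case i of ((u1,v1),(u2,v2)) \<Rightarrow> smult (X u1 v1) (Y u2 v2)) else 0)"
    by (rule LF_qm[OF fin])
  thus ?thesis by (rule LF_PF[OF LF_mono]) (auto simp: Pf_def split: prod.splits if_splits)
qed


lemma part_i:
  "smult (Tgen [sX1] [sY1]) (Tgen [sX2] [sY2]) =
           Tgen [sX1, sX2] [sY1, sY2] + Tgen [sX2, sX1] [sY2, sY1]
           + sdiv (Tgen [sX1] [sY1 + sY2] - Tgen [sX2] [sY1 + sY2]) (sX1 - sX2)
           + fsum (\<lambda>k::nat. if k = 0 then 0 else
                sscale (bernoulli k / fact k)
                  (smult (spow (sX1 - sX2) (k - 1))
                     (Tgen [sX1] [sY1 + sY2] + sscale ((-1) ^ (k - 1)) (Tgen [sX2] [sY1 + sY2]))))"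
proof -
  note nc = NC_vars
  have ncY: "NC (sY1 + sY2)" using nc by (intro NC_add)
  let ?X = "\<lambda>u v. smult (ex sX1 v) (ex sY1 u)" and ?Y = "\<lambda>u v. smult (ex sX2 v) (ex sY2 u)"
  let ?F = "Pf ?X ?Y"
  have "smult (Tgen [sX1] [sY1]) (Tgen [sX2] [sY2]) = fsum ?F"
    by (simp add: Tgen1 nc prod_Pf)
  also have "\<dots> = fsum (\<lambda>i. if (case i of ((u1,v1),(u2,v2)) \<Rightarrow> u2 < u1) then ?F i else 0)
     + fsum (\<lambda>i. if (case i of ((u1,v1),(u2,v2)) \<Rightarrow> u1 < u2) then ?F i else 0)
     + fsum (\<lambda>i. if (case i of ((u1,v1),(u2,v2)) \<Rightarrow> u1 = u2) then ?F i else 0)"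
    by (rule fsum_split3[OF PF_Pf]) (auto split: prod.splits)
  also have "fsum (\<lambda>i. if (case i of ((u1,v1),(u2,v2)) \<Rightarrow> u2 < u1) then ?F i else 0) = T2f sX1 sX2 sY1 sY2"
    unfolding T2f_def
    by (rule fsum_reindex[where A="{((u1,v1),(u2,v2)). u2 < u1 \<and> 0 < u1 \<and> 0 < v1 \<and> 0 < u2 \<and> 0 < v2}"
          and B="{(u1,u2,v1,v2). u2 < u1 \<and> 0 < u2 \<and> 0 < v1 \<and> 0 < v2}"
          and h="\<lambda>((u1,v1),(u2,v2)). (u1,u2,v1,v2)" and k="\<lambda>(u1,u2,v1,v2). ((u1,v1),(u2,v2))"])
       (auto simp: Pf_def smult_ac split: prod.splits)
  also have "fsum (\<lambda>i. if (case i of ((u1,v1),(u2,v2)) \<Rightarrow> u1 < u2) then ?F i else 0) = T2f sX2 sX1 sY2 sY1"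
    unfolding T2f_def
    by (rule fsum_reindex[where A="{((u1,v1),(u2,v2)). u1 < u2 \<and> 0 < u1 \<and> 0 < v1 \<and> 0 < u2 \<and> 0 < v2}"
          and B="{(u1,u2,v1,v2). u2 < u1 \<and> 0 < u2 \<and> 0 < v1 \<and> 0 < v2}"
          and h="\<lambda>((u1,v1),(u2,v2)). (u2,u1,v2,v1)" and k="\<lambda>(u2,u1,v2,v1). ((u1,v1),(u2,v2))"])
       (auto simp: Pf_def smult_ac add.commute split: prod.splits)
  also have "fsum (\<lambda>i. if (case i of ((u1,v1),(u2,v2)) \<Rightarrow> u1 = u2) then ?F i else 0) = Diag (sY1 + sY2) sX1 sX2"
    unfolding Diag_def
    by (rule fsum_reindex[where A="{((u1,v1),(u2,v2)). u1 = u2 \<and> 0 < u1 \<and> 0 < v1 \<and> 0 < u2 \<and> 0 < v2}"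
          and B="{(w,i,j). 0 < w \<and> 0 < i \<and> 0 < j}"
          and h="\<lambda>((u1,v1),(u2,v2)). (u1,v1,v2)" and k="\<lambda>(w,i,j). ((w,i),(w,j))"])
       (auto simp: Pf_def smult_ac ex_add_var nc distrib_left split: prod.splits)
  also have "Diag (sY1 + sY2) sX1 sX2 = sdiv (Tgen [sX1] [sY1 + sY2] - Tgen [sX2] [sY1 + sY2]) (sX1 - sX2)
           + fsum (\<lambda>k::nat. if k = 0 then 0 else
                sscale (bernoulli k / fact k)
                  (smult (spow (sX1 - sX2) (k - 1))
                     (Tgen [sX1] [sY1 + sY2] + sscale ((-1) ^ (k - 1)) (Tgen [sX2] [sY1 + sY2]))))"
  proof -
    have t1: "Tgen [sX1] [sY1 + sY2] = fsum (QF (\<lambda>w n. smult (ex (sY1 + sY2) w) (ex sX1 n)))"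
      by (simp add: Tgen1 nc ncY) (rule QF_cong, simp add: smult_comm)
    have t2: "Tgen [sX2] [sY1 + sY2] = fsum (QF (\<lambda>w n. smult (ex (sY1 + sY2) w) (ex sX2 n)))"
      by (simp add: Tgen1 nc ncY) (rule QF_cong, simp add: smult_comm)
    show ?thesis unfolding t1 t2 by (rule diag_main[OF nc(1,2) vars_ne(1)])
  qed
  finally show ?thesis unfolding Tgen2[OF nc(1,2,3,4)] Tgen2[OF nc(2,1,4,3)] by (simp only: add.assoc)
qed


lemma arith1: assumes "(v2::nat) \<le> v1" shows "(u1 + u2) * v2 + u1 * (v1 - v2) = u1 * v1 + u2 * v2"
proof -
  have h: "u1 * v2 \<le> u1 * v1" using assms by (rule mult_le_mono2)
  have "(u1 + u2) * v2 + u1 * (v1 - v2) = u1 * v2 + u2 * v2 + (u1 * v1 - u1 * v2)"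
    by (simp add: add_mult_distrib diff_mult_distrib2)
  also have "\<dots> = u1 * v1 + u2 * v2" using h by linarith
  finally show ?thesis .
qed

lemma t_eq1: assumes "v2 < v1"
  shows "smult (ex (sX1 + sX2) v2) (smult (ex sX1 (v1 - v2)) (smult (ex sY2 (u1 + u2)) (ex (sY1 - sY2) u1)))
    = smult (smult (ex sX1 v1) (ex sY1 u1)) (smult (ex sX2 v2) (ex sY2 u2))"
proof -
  note nc = NC_vars
  have e1: "ex (sX1 + sX2) v2 = smult (ex sX1 v2) (ex sX2 v2)" by (rule ex_add_var[OF nc(1,2)])
  have e2: "ex sX1 v1 = smult (ex sX1 v2) (ex sX1 (v1 - v2))"
    using ex_add_n[OF nc(1), of v2 "v1 - v2"] assms by simp
  have e3: "ex sY2 (u1 + u2) = smult (ex sY2 u1) (ex sY2 u2)" by (rule ex_add_n[OF nc(4)])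
  have e4: "ex sY1 u1 = smult (ex (sY1 - sY2) u1) (ex sY2 u1)"
    using ex_add_var[OF NC_diff[OF nc(3,4)] nc(4), of u1] by simp
  show ?thesis unfolding e1 e2 e3 e4 by (simp add: smult_ac)
qed

lemma t_eq2: assumes "v1 < v2"
  shows "smult (ex (sX1 + sX2) v1) (smult (ex sX2 (v2 - v1)) (smult (ex sY1 (u1 + u2)) (ex (sY2 - sY1) u2)))
    = smult (smult (ex sX1 v1) (ex sY1 u1)) (smult (ex sX2 v2) (ex sY2 u2))"
proof -
  note nc = NC_vars
  have e1: "ex (sX1 + sX2) v1 = smult (ex sX1 v1) (ex sX2 v1)" by (rule ex_add_var[OF nc(1,2)])
  have e2: "ex sX2 v2 = smult (ex sX2 v1) (ex sX2 (v2 - v1))"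
    using ex_add_n[OF nc(2), of v1 "v2 - v1"] assms by simp
  have e3: "ex sY1 (u1 + u2) = smult (ex sY1 u1) (ex sY1 u2)" by (rule ex_add_n[OF nc(3)])
  have e4: "ex sY2 u2 = smult (ex (sY2 - sY1) u2) (ex sY1 u2)"
    using ex_add_var[OF NC_diff[OF nc(4,3)] nc(3), of u2] by simp
  show ?thesis unfolding e1 e2 e3 e4 by (simp add: smult_ac)
qed

lemma part_ii:
  "smult (Tgen [sX1] [sY1]) (Tgen [sX2] [sY2]) =
           Tgen [sX1 + sX2, sX1] [sY2, sY1 - sY2] + Tgen [sX1 + sX2, sX2] [sY1, sY2 - sY1]
           + sdiv (Tgen [sX1 + sX2] [sY1] - Tgen [sX1 + sX2] [sY2]) (sY1 - sY2)
           + fsum (\<lambda>k::nat. if k = 0 then 0 else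
                sscale (bernoulli k / fact k)
                  (smult (spow (sY1 - sY2) (k - 1))
                     (Tgen [sX1 + sX2] [sY1] + sscale ((-1) ^ (k - 1)) (Tgen [sX1 + sX2] [sY2]))))"
proof -
  note nc = NC_vars
  have ncX: "NC (sX1 + sX2)" using nc by (intro NC_add)
  have ncY1: "NC (sY1 - sY2)" by (rule NC_diff[OF nc(3,4)])
  have ncY2: "NC (sY2 - sY1)" by (rule NC_diff[OF nc(4,3)])
  let ?X = "\<lambda>u v. smult (ex sX1 v) (ex sY1 u)" and ?Y = "\<lambda>u v. smult (ex sX2 v) (ex sY2 u)"
  let ?F = "Pf ?X ?Y"
  have "smult (Tgen [sX1] [sY1]) (Tgen [sX2] [sY2]) = fsum ?F"
    by (simp add: Tgen1 nc prod_Pf)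
  also have "\<dots> = fsum (\<lambda>i. if (case i of ((u1,v1),(u2,v2)) \<Rightarrow> v2 < v1) then ?F i else 0)
     + fsum (\<lambda>i. if (case i of ((u1,v1),(u2,v2)) \<Rightarrow> v1 < v2) then ?F i else 0)
     + fsum (\<lambda>i. if (case i of ((u1,v1),(u2,v2)) \<Rightarrow> v1 = v2) then ?F i else 0)"
    by (rule fsum_split3[OF PF_Pf]) (auto split: prod.splits)
  also have "fsum (\<lambda>i. if (case i of ((u1,v1),(u2,v2)) \<Rightarrow> v2 < v1) then ?F i else 0)
      = T2f (sX1 + sX2) sX1 sY2 (sY1 - sY2)"
    unfolding T2f_def
  proof (rule fsum_reindex[where A="{((u1,v1),(u2,v2)). v2 < v1 \<and> 0 < u1 \<and> 0 < v1 \<and> 0 < u2 \<and> 0 < v2}"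
          and B="{(a1,a2,b1,b2). a2 < a1 \<and> 0 < a2 \<and> 0 < b1 \<and> 0 < b2}"
          and h="\<lambda>((u1,v1),(u2,v2)). (u1+u2,u1,v2,v1-v2)" and k="\<lambda>(a1,a2,b1,b2). ((a2,b1+b2),(a1-a2,b1))"])
    fix i :: "(nat \<times> nat) \<times> (nat \<times> nat)" assume "i \<in> {((u1,v1),(u2,v2)). v2 < v1 \<and> 0 < u1 \<and> 0 < v1 \<and> 0 < u2 \<and> 0 < v2}"
    then obtain u1 v1 u2 v2 where i: "i = ((u1,v1),(u2,v2))" "v2 < v1" "0 < u1" "0 < v1" "0 < u2" "0 < v2"
      by auto
    show "(\<lambda>(a1,a2,b1,b2). if a2 < a1 \<and> 0 < a2 \<and> 0 < b1 \<and> 0 < b2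
     then smult (qm (a1*b1 + a2*b2)) (smult (ex (sX1 + sX2) b1) (smult (ex sX1 b2) (smult (ex sY2 a1) (ex (sY1 - sY2) a2))))
     else 0) ((\<lambda>((u1,v1),(u2,v2)). (u1+u2,u1,v2,v1-v2)) i) =
       (if (case i of ((u1,v1),(u2,v2)) \<Rightarrow> v2 < v1) then ?F i else 0)"
      using i by (simp add: Pf_def arith1 t_eq1)
  qed (auto simp: Pf_def split: prod.splits)
  also have "fsum (\<lambda>i. if (case i of ((u1,v1),(u2,v2)) \<Rightarrow> v1 < v2) then ?F i else 0)
      = T2f (sX1 + sX2) sX2 sY1 (sY2 - sY1)"
    unfolding T2f_def
  proof (rule fsum_reindex[where A="{((u1,v1),(u2,v2)). v1 < v2 \<and> 0 < u1 \<and> 0 < v1 \<and> 0 < u2 \<and> 0 < v2}"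
          and B="{(a1,a2,b1,b2). a2 < a1 \<and> 0 < a2 \<and> 0 < b1 \<and> 0 < b2}"
          and h="\<lambda>((u1,v1),(u2,v2)). (u1+u2,u2,v1,v2-v1)" and k="\<lambda>(a1,a2,b1,b2). ((a1-a2,b1),(a2,b1+b2))"])
    fix i :: "(nat \<times> nat) \<times> (nat \<times> nat)" assume "i \<in> {((u1,v1),(u2,v2)). v1 < v2 \<and> 0 < u1 \<and> 0 < v1 \<and> 0 < u2 \<and> 0 < v2}"
    then obtain u1 v1 u2 v2 where i: "i = ((u1,v1),(u2,v2))" "v1 < v2" "0 < u1" "0 < v1" "0 < u2" "0 < v2"
      by auto
    have ar: "(u1 + u2) * v1 + u2 * (v2 - v1) = u1 * v1 + u2 * v2"
      using arith1[of v1 v2 u2 u1] i(2) by (simp add: add.commute)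
    show "(\<lambda>(a1,a2,b1,b2). if a2 < a1 \<and> 0 < a2 \<and> 0 < b1 \<and> 0 < b2
     then smult (qm (a1*b1 + a2*b2)) (smult (ex (sX1 + sX2) b1) (smult (ex sX2 b2) (smult (ex sY1 a1) (ex (sY2 - sY1) a2))))
     else 0) ((\<lambda>((u1,v1),(u2,v2)). (u1+u2,u2,v1,v2-v1)) i) =
       (if (case i of ((u1,v1),(u2,v2)) \<Rightarrow> v1 < v2) then ?F i else 0)"
      using i by (simp add: Pf_def ar t_eq2)
  qed (auto simp: Pf_def split: prod.splits)
  also have "fsum (\<lambda>i. if (case i of ((u1,v1),(u2,v2)) \<Rightarrow> v1 = v2) then ?F i else 0) = Diag (sX1 + sX2) sY1 sY2"
    unfolding Diag_def
    by (rule fsum_reindex[where A="{((u1,v1),(u2,v2)). v1 = v2 \<and> 0 < u1 \<and> 0 < v1 \<and> 0 < u2 \<and> 0 < v2}"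
          and B="{(w,i,j). 0 < w \<and> 0 < i \<and> 0 < j}"
          and h="\<lambda>((u1,v1),(u2,v2)). (v1,u1,u2)" and k="\<lambda>(w,i,j). ((i,w),(j,w))"])
       (auto simp: Pf_def smult_ac ex_add_var nc algebra_simps split: prod.splits)
  also have "Diag (sX1 + sX2) sY1 sY2 = sdiv (Tgen [sX1 + sX2] [sY1] - Tgen [sX1 + sX2] [sY2]) (sY1 - sY2)
           + fsum (\<lambda>k::nat. if k = 0 then 0 else
                sscale (bernoulli k / fact k)
                  (smult (spow (sY1 - sY2) (k - 1))
                     (Tgen [sX1 + sX2] [sY1] + sscale ((-1) ^ (k - 1)) (Tgen [sX1 + sX2] [sY2]))))"
  proof -
    have t1: "Tgen [sX1 + sX2] [sY1] = fsum (QF (\<lambda>w n. smult (ex (sX1 + sX2) w) (ex sY1 n)))"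
      by (simp add: Tgen1 nc ncX) (rule QF_swap)
    have t2: "Tgen [sX1 + sX2] [sY2] = fsum (QF (\<lambda>w n. smult (ex (sX1 + sX2) w) (ex sY2 n)))"
      by (simp add: Tgen1 nc ncX) (rule QF_swap)
    show ?thesis unfolding t1 t2 by (rule diag_main[OF nc(3,4) vars_ne(2)])
  qed
  finally show ?thesis
    unfolding Tgen2[OF ncX nc(1) nc(4) ncY1] Tgen2[OF ncX nc(2) nc(3) ncY2] by (simp only: add.assoc)
qed

theorem lemma3p2:
  shows "smult (Tgen [sX1] [sY1]) (Tgen [sX2] [sY2]) =
           Tgen [sX1, sX2] [sY1, sY2] + Tgen [sX2, sX1] [sY2, sY1]
           + sdiv (Tgen [sX1] [sY1 + sY2] - Tgen [sX2] [sY1 + sY2]) (sX1 - sX2)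
           + fsum (\<lambda>k::nat. if k = 0 then 0 else
                sscale (bernoulli k / fact k)
                  (smult (spow (sX1 - sX2) (k - 1))
                     (Tgen [sX1] [sY1 + sY2] + sscale ((-1) ^ (k - 1)) (Tgen [sX2] [sY1 + sY2]))))
       \<and> smult (Tgen [sX1] [sY1]) (Tgen [sX2] [sY2]) =
           Tgen [sX1 + sX2, sX1] [sY2, sY1 - sY2] + Tgen [sX1 + sX2, sX2] [sY1, sY2 - sY1]
           + sdiv (Tgen [sX1 + sX2] [sY1] - Tgen [sX1 + sX2] [sY2]) (sY1 - sY2)
           + fsum (\<lambda>k::nat. if k = 0 then 0 else
                sscale (bernoulli k / fact k)
                  (smult (spow (sY1 - sY2) (k - 1))
                     (Tgen [sX1 + sX2] [sY1] + sscale ((-1) ^ (k - 1)) (Tgen [sX1 + sX2] [sY2]))))"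
  using part_i part_ii by blast


end
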